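(* Let $\beta,\rho>0$ and $y\in\mathbb{R}^n$. Then the multifunction $\mathcal M$ is nonempty, compact valued and upper-semicontinuous. For any $M\in\mathcal M(y)$, both $M$ and $I_n-M$ are symmetric and positive semidefinite. Moreover, there exists a neighborhood $\mathcal Y$ of $y$ such that for all $u\in\mathcal Y$, \[ \mathrm{Prox}_p(u)-\mathrm{Prox}_p(y)-M(u-y)=0\quad\forall M\in\mathcal M(u). \]
   Context: $p(x):=\beta\|x\|_1+\rho\sum_{1\le i<j\le n}|x_i-x_j|$ and $\mathrm{Prox}_p(y):=\operatorname{argmin}_x\{\tfrac12\|x-y\|^2+p(x)\}$. $S_\rho(y):=\operatorname{argmin}_x\{\tfrac12\|x-y\|^2+\rho\sum_{i<j}|x_i-x_j|\}$; it is known that $\mathrm{Prox}_p(y)=\mathrm{Prox}_{\beta\|\cdot\|_1}(S_\rho(y))$. $w\in\mathbb{R}^n$, $w_k=n-2k+1$. $\mathcal D:=\{x: x_1\ge\cdots\ge x_n\}$, $\Pi_{\mathcal D}$ the Euclidean projection. $B\in\mathbb{R}^{(n-1)\times n}$ with $Bx=(x_1-x_2,\dots,x_{n-1}-x_n)^T$, $B_i$ its $i$-th row, $B_K$ rows indexed by $K$. For each $y$, $P_y$ is a fixed permutation matrix such that $P_yy$ has non-increasing components. For $v\in\mathbb{R}^n$: $\mathcal M_{\mathcal D}(v)$ is the set of $\lambda\in\mathbb{R}^{n-1}$ with $\Pi_{\mathcal D}(v)-v+B^T\lambda=0$, $B\Pi_{\mathcal D}(v)\ge0$, $\lambda\le0$,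 $\lambda^TB\Pi_{\mathcal D}(v)=0$; $\mathcal I_{\mathcal D}(v):=\{i: B_i\Pi_{\mathcal D}(v)=0\}$; $\mathcal K_{\mathcal D}(v):=\{K\subseteq\{1,\dots,n-1\}:\exists\lambda\in\mathcal M_{\mathcal D}(v),\ \mathrm{supp}(\lambda)\subseteq K\subseteq\mathcal I_{\mathcal D}(v),\ B_K\text{ full row rank}\}$; $\mathcal Q_{\mathcal D}(v):=\{I_n-B_K^T(B_KB_K^T)^{-1}B_K:K\in\mathcal K_{\mathcal D}(v)\}$; $\mathcal Q_{S_\rho}(y):=\{P_y^T\widehat QP_y:\widehat Q\in\mathcal Q_{\mathcal D}(P_yy-\rho w)\}$. For $\eta\in\mathbb{R}^n$, $\partial_B\mathrm{Prox}_{\beta\|\cdot\|_1}(\eta)$ is the set of diagonal matrices $\mathrm{Diag}(q)$ with $q_i=0$ if $|\eta_i|<\beta$, $q_i\in\{0,1\}$ if $|\eta_i|=\beta$, $q_i=1$ if $|\eta_i|>\beta$. Finally $\mathcal M(y):=\{M\in\mathcal S^n: M=\Theta Q,\ \Theta\in\partial_B\mathrm{Prox}_{\beta\|\cdot\|_1}(S_\rho(y)),\ Q\in\mathcal Q_{S_\rho}(y)\}$, where $\mathcal S^n$ is the set of symmetric $n\times n$ matrices. *)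

theory Defs
  imports "HOL-Analysis.Analysis"
begin

text \<open>Components of R^n are indexed by a finite, well-ordered type 'n; the order of
  'n gives the positions 1..n. The i-th position of an index i is card {j. j < i} + 1.\<close>

definition l1norm :: "real^'n::{finite,wellorder} \<Rightarrow> real" where
  "l1norm x = (\<Sum>i\<in>UNIV. \<bar>x$i\<bar>)"

definition pairpen :: "real^'n::{finite,wellorder} \<Rightarrow> real" where
  "pairpen x = (\<Sum>i\<in>UNIV. \<Sum>j\<in>{j. i < j}. \<bar>x$i - x$j\<bar>)"

definition penp :: "real \<Rightarrow> real \<Rightarrow> real^'n::{finite,wellorder} \<Rightarrow> real" where
  "penp \<beta> \<rho> x = \<beta> * l1norm x + \<rho> * pairpen x"

definition prox :: "(real^'n::{finite,wellorder} \<Rightarrow> real) \<Rightarrow> real^'n::{finite,wellorder} \<Rightarrow> real^'n::{finite,wellorder}" where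
  "prox f y = (SOME x. \<forall>z. (1/2) * (norm (x - y))\<^sup>2 + f x \<le> (1/2) * (norm (z - y))\<^sup>2 + f z)"

definition Sfun :: "real \<Rightarrow> real^'n::{finite,wellorder} \<Rightarrow> real^'n::{finite,wellorder}" where
  "Sfun \<rho> y = prox (\<lambda>x. \<rho> * pairpen x) y"

definition wvec :: "real^'n::{finite,wellorder}" where
  "wvec = (\<chi> i. real CARD('n) - 2 * real (card {j. j < i}) - 1)"

definition Dset :: "(real^'n::{finite,wellorder}) set" where
  "Dset = {x. \<forall>i j. i \<le> j \<longrightarrow> x$j \<le> x$i}"

definition projD :: "real^'n::{finite,wellorder} \<Rightarrow> real^'n::{finite,wellorder}" where
  "projD v = closest_point Dset v"

text \<open>Rows of B are indexed by the non-maximal indices i (positions 1..n-1);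
  row i is e_i - e_(next i).\<close>
definition brows :: "'n::{finite,wellorder} set" where
  "brows = {i. i < Max UNIV}"

definition nxt :: "'n::{finite,wellorder} \<Rightarrow> 'n::{finite,wellorder}" where
  "nxt i = (LEAST j. i < j)"

definition Brow :: "'n::{finite,wellorder} \<Rightarrow> real^'n::{finite,wellorder}" where
  "Brow i = (\<chi> j. if j = i then 1 else if j = nxt i then -1 else 0)"

text \<open>B_K padded with zero rows outside K (so it is an n x n matrix).\<close>
definition BK :: "'n::{finite,wellorder} set \<Rightarrow> real^'n::{finite,wellorder}^'n::{finite,wellorder}" where
  "BK K = (\<chi> i. if i \<in> K then Brow i else 0)"

text \<open>I - B_K^T (B_K B_K^T)^{-1} B_K. The K x K Gram matrix B_K B_K^T is padded with
  the identity on the complement of K, which leaves the product unchanged.\<close>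
definition projK :: "'n::{finite,wellorder} set \<Rightarrow> real^'n::{finite,wellorder}^'n::{finite,wellorder}" where
  "projK K = mat 1 - transpose (BK K) **
      matrix_inv (BK K ** transpose (BK K) + (\<chi> i j. if i = j \<and> i \<notin> K then 1 else 0)) ** BK K"

text \<open>Multipliers lambda in R^(n-1) are represented as vectors in R^n vanishing at the
  maximal index.\<close>
definition MD :: "real^'n::{finite,wellorder} \<Rightarrow> (real^'n::{finite,wellorder}) set" where
  "MD v = {lam. lam $ (Max UNIV) = 0 \<and>
     projD v - v + (\<Sum>i\<in>brows. lam$i *\<^sub>R Brow i) = 0 \<and>
     (\<forall>i\<in>brows. Brow i \<bullet> projD v \<ge> 0) \<and>
     (\<forall>i\<in>brows. lam$i \<le> 0) \<and>
     (\<Sum>i\<in>brows. lam$i * (Brow i \<bullet> projD v)) = 0}"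

definition ID :: "real^'n::{finite,wellorder} \<Rightarrow> 'n::{finite,wellorder} set" where
  "ID v = {i\<in>brows. Brow i \<bullet> projD v = 0}"

definition KD :: "real^'n::{finite,wellorder} \<Rightarrow> 'n::{finite,wellorder} set set" where
  "KD v = {K. \<exists>lam\<in>MD v. {i. lam$i \<noteq> 0} \<subseteq> K \<and> K \<subseteq> ID v \<and> rank (BK K) = card K}"

definition QD :: "real^'n::{finite,wellorder} \<Rightarrow> (real^'n::{finite,wellorder}^'n::{finite,wellorder}) set" where
  "QD v = projK ` KD v"

definition permmat :: "('n::{finite,wellorder} \<Rightarrow> 'n::{finite,wellorder}) \<Rightarrow> real^'n::{finite,wellorder}^'n::{finite,wellorder}" where
  "permmat \<sigma> = (\<chi> i j. if \<sigma> i = j then 1 else 0)"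

text \<open>sigma y is the fixed permutation with (P_y y)_i = y_(sigma y i).\<close>
definition QS :: "real \<Rightarrow> (real^'n::{finite,wellorder} \<Rightarrow> 'n::{finite,wellorder} \<Rightarrow> 'n::{finite,wellorder}) \<Rightarrow> real^'n::{finite,wellorder} \<Rightarrow> (real^'n::{finite,wellorder}^'n::{finite,wellorder}) set" where
  "QS \<rho> \<sigma> y = {transpose (permmat (\<sigma> y)) ** Qh ** permmat (\<sigma> y) | Qh.
       Qh \<in> QD (permmat (\<sigma> y) *v y - \<rho> *\<^sub>R wvec)}"

definition dBprox_l1 :: "real \<Rightarrow> real^'n::{finite,wellorder} \<Rightarrow> (real^'n::{finite,wellorder}^'n::{finite,wellorder}) set" where
  "dBprox_l1 \<beta> \<eta> = {(\<chi> i j. if i = j then q i else 0) | q.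
      \<forall>i. (\<bar>\<eta>$i\<bar> < \<beta> \<longrightarrow> q i = 0) \<and> (\<bar>\<eta>$i\<bar> = \<beta> \<longrightarrow> q i \<in> {0,1}) \<and> (\<bar>\<eta>$i\<bar> > \<beta> \<longrightarrow> q i = 1)}"

definition Mset :: "real \<Rightarrow> real \<Rightarrow> (real^'n::{finite,wellorder} \<Rightarrow> 'n::{finite,wellorder} \<Rightarrow> 'n::{finite,wellorder}) \<Rightarrow> real^'n::{finite,wellorder} \<Rightarrow> (real^'n::{finite,wellorder}^'n::{finite,wellorder}) set" where
  "Mset \<beta> \<rho> \<sigma> y = {\<Theta> ** Q | \<Theta> Q. \<Theta> \<in> dBprox_l1 \<beta> (Sfun \<rho> y) \<and> Q \<in> QS \<rho> \<sigma> y \<and>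
       transpose (\<Theta> ** Q) = \<Theta> ** Q}"

definition psd :: "real^'n::{finite,wellorder}^'n::{finite,wellorder} \<Rightarrow> bool" where
  "psd A = (\<forall>x. 0 \<le> x \<bullet> (A *v x))"

end

theory Submission
  imports Defs
begin


lemma Max_ge_UNIV: "(i::'n::{finite,wellorder}) \<le> Max UNIV"
  by (simp add: Max_ge)

lemma brows_iff: "(i::'n::{finite,wellorder}) \<in> brows \<longleftrightarrow> i \<noteq> Max UNIV"
  unfolding brows_def using Max_ge_UNIV[of i] by (auto simp: order_le_neq_trans)

lemma nxt_gt: "(i::'n::{finite,wellorder}) \<in> brows \<Longrightarrow> i < nxt i"
  unfolding nxt_def brows_def by (rule LeastI[of _ "Max UNIV"]) simp

lemma nxt_le: "(i::'n::{finite,wellorder}) < j \<Longrightarrow> nxt i \<le> j"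
  unfolding nxt_def by (rule Least_le)

lemma nxt_between: "(i::'n::{finite,wellorder}) \<le> k \<Longrightarrow> k < nxt i \<Longrightarrow> k = i"
  using nxt_le[of i k] by (metis leD order_le_neq_trans)

lemma nxt_ne: "(i::'n::{finite,wellorder}) \<in> brows \<Longrightarrow> nxt i \<noteq> i"
  using nxt_gt[of i] by auto

lemma Brow_nth: "Brow i $ j = (if j = i then 1 else if j = nxt i then -1 else 0)"
  unfolding Brow_def by simp

lemma inner_Brow: "(i::'n::{finite,wellorder}) \<in> brows \<Longrightarrow> inner (Brow i) x = x$i - x$(nxt i)"
proof -
  assume i: "i \<in> brows"
  have "inner (Brow i) x = (\<Sum>j\<in>UNIV. (if j = i then x$j else 0) + (if j = nxt i then - x$j else 0))"
    unfolding inner_vec_def using nxt_ne[OF i]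
    by (intro sum.cong) (auto simp: Brow_nth)
  also have "\<dots> = x$i - x$(nxt i)"
    by (simp add: sum.distrib)
  finally show ?thesis .
qed

definition bt :: "('n::{finite,wellorder} \<Rightarrow> real) \<Rightarrow> real^'n::{finite,wellorder}" where
  "bt c = (\<Sum>i\<in>brows. c i *\<^sub>R Brow i)"

definition psum :: "real^'n::{finite,wellorder} \<Rightarrow> 'n::{finite,wellorder} \<Rightarrow> real" where
  "psum x k = (\<Sum>j\<in>{..k}. x$j)"

lemma sum_Brow_upto: "(i::'n::{finite,wellorder}) \<in> brows \<Longrightarrow>
   (\<Sum>j\<in>{..k}. Brow i $ j) = (if i = k then 1 else 0)"
proof -
  assume i: "i \<in> brows"
  have "(\<Sum>j\<in>{..k}. Brow i $ j) = (\<Sum>j\<in>{..k}. (if j = i then 1 else 0) + (if j = nxt i then -1 else 0))"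
    using nxt_ne[OF i] by (intro sum.cong) (auto simp: Brow_nth)
  also have "\<dots> = (if i \<le> k then 1 else 0) + (if nxt i \<le> k then -1 else 0)"
    by (simp add: sum.distrib)
  also have "\<dots> = (if i = k then 1 else 0)"
  proof (cases "i = k")
    case True then show ?thesis using nxt_gt[OF i] by auto
  next
    case False
    show ?thesis
    proof (cases "i \<le> k")
      case True then have "i < k" using False by auto
      then show ?thesis using nxt_le[of i k] False by auto
    next
      case f2: False then show ?thesis using nxt_gt[OF i] False by auto
    qed
  qed
  finally show ?thesis .
qed

lemma psum_bt: "psum (bt c) k = (if k \<in> brows then c k else 0)"
proof -
  have "psum (bt c) k = (\<Sum>j\<in>{..k}. \<Sum>i\<in>brows. c i * Brow i $ j)"
    unfolding psum_def bt_def by (simp add: sum_component)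
  also have "\<dots> = (\<Sum>i\<in>brows. c i * (\<Sum>j\<in>{..k}. Brow i $ j))"
    by (subst sum.swap) (simp add: sum_distrib_left)
  also have "\<dots> = (\<Sum>i\<in>brows. if i = k then c i else 0)"
    by (intro sum.cong) (auto simp: sum_Brow_upto)
  also have "\<dots> = (if k \<in> brows then c k else 0)"
    by (simp add: sum.delta')
  finally show ?thesis .
qed

lemma psum_inj:
  assumes "\<And>k. psum a k = psum b (k::'n::{finite,wellorder})"
  shows "a = b"
proof -
  have "a$k = b$k" for k
  proof (induction k rule: less_induct)
    case (less k)
    have e: "{..k} = insert k {..<k}" by auto
    have "psum a k = a$k + (\<Sum>j\<in>{..<k}. a$j)" "psum b k = b$k + (\<Sum>j\<in>{..<k}. b$j)"
      unfolding psum_def e by simp_all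
    moreover have "(\<Sum>j\<in>{..<k}. a$j) = (\<Sum>j\<in>{..<k}. b$j)"
      using less by (intro sum.cong) auto
    ultimately show ?case using assms[of k] by simp
  qed
  then show ?thesis by (simp add: vec_eq_iff)
qed

lemma bt_psum:
  assumes "(\<Sum>i\<in>UNIV. x$i) = (0::real)"
  shows "bt (psum x) = (x::real^'n::{finite,wellorder})"
proof (rule psum_inj)
  fix k
  show "psum (bt (psum x)) k = psum x k"
  proof (cases "k \<in> brows")
    case False
    then have "k = Max UNIV" by (simp add: brows_iff)
    then have "{..k} = UNIV" using Max_ge_UNIV by auto
    then have "psum x k = 0" using assms by (simp add: psum_def)
    then show ?thesis using False by (simp add: psum_bt)
  qed (simp add: psum_bt)
qed

lemma bt_eqD: "bt c = bt c' \<Longrightarrow> (k::'n::{finite,wellorder}) \<in> brows \<Longrightarrow> c k = c' k"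
  using psum_bt[of c k] psum_bt[of c' k] by simp


lemma Dset_iff: "x \<in> Dset \<longleftrightarrow> (\<forall>i j. i \<le> j \<longrightarrow> x$j \<le> x$i)"
  unfolding Dset_def by simp

lemma closed_Dset: "closed (Dset :: (real^'n::{finite,wellorder}) set)"
proof -
  have "closed {x::real^'n::{finite,wellorder}. i \<le> j \<longrightarrow> x$j \<le> x$i}" for i j
    by (cases "i \<le> j") (auto intro!: closed_Collect_le continuous_intros)
  then show ?thesis unfolding Dset_def
    by (intro closed_Collect_all) auto
qed

lemma convex_Dset: "convex (Dset :: (real^'n::{finite,wellorder}) set)"
  unfolding convex_def by (auto simp: Dset_iff intro!: add_mono mult_left_mono)

lemma zero_Dset: "0 \<in> Dset"
  by (simp add: Dset_iff)

lemma Dset_ne: "Dset \<noteq> {}"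
  using zero_Dset by auto

lemma Dset_add: "x \<in> Dset \<Longrightarrow> y \<in> Dset \<Longrightarrow> x + y \<in> Dset"
  by (auto simp: Dset_iff intro: add_mono)

lemma Dset_scale: "x \<in> Dset \<Longrightarrow> c \<ge> 0 \<Longrightarrow> c *\<^sub>R x \<in> Dset"
  by (auto simp: Dset_iff intro: mult_left_mono)

lemma Dset_const: "(\<chi> i. c) \<in> Dset"
  by (simp add: Dset_iff)

lemma Dset_ind: "(\<chi> j. if j \<le> k then (1::real) else 0) \<in> Dset"
  by (auto simp: Dset_iff)

lemma projD_in: "projD v \<in> Dset"
  unfolding projD_def by (rule closest_point_in_set[OF closed_Dset Dset_ne])

lemma projD_VI: "x \<in> Dset \<Longrightarrow> inner (v - projD v) (x - projD v) \<le> 0"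
  unfolding projD_def by (rule closest_point_dot[OF convex_Dset closed_Dset])

lemma projD_lip: "dist (projD a) (projD b) \<le> dist a b"
  unfolding projD_def by (rule closest_point_lipschitz[OF convex_Dset closed_Dset Dset_ne])

lemma projD_self: "x \<in> Dset \<Longrightarrow> projD x = x"
  unfolding projD_def by (rule closest_point_self)

lemma VI_add:
  assumes "d \<in> Dset"
  shows "inner (v - projD v) d \<le> 0"
  using projD_VI[OF Dset_add[OF projD_in[of v] assms], of v] by simp

lemma res_sum0: "(\<Sum>i\<in>UNIV. (v - projD v)$i) = 0"
proof -
  have "inner (v - projD v) (\<chi> i. 1) \<le> 0" "inner (v - projD v) (\<chi> i. -1) \<le> 0"
    by (rule VI_add, rule Dset_const)+
  then have "(\<Sum>i\<in>UNIV. (v - projD v)$i) \<le> 0" "- (\<Sum>i\<in>UNIV. (v - projD v)$i) \<le> 0"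
    unfolding inner_vec_def by (simp_all add: sum_negf sum_subtractf)
  then show ?thesis by linarith
qed

lemma res_inner0: "inner (v - projD v) (projD v) = 0"
proof -
  have "inner (v - projD v) (0 - projD v) \<le> 0"
    by (rule projD_VI[OF zero_Dset])
  moreover have "inner (v - projD v) (projD v) \<le> 0"
    by (rule VI_add[OF projD_in])
  ultimately show ?thesis by (simp add: inner_diff_right)
qed

definition lamv :: "real^'n::{finite,wellorder} \<Rightarrow> real^'n::{finite,wellorder}" where
  "lamv v = (\<chi> k. psum (v - projD v) k)"

lemma lamv_nonpos: "lamv v $ k \<le> 0"
proof -
  have "inner (v - projD v) (\<chi> j. if j \<le> k then 1 else 0) \<le> 0"
    by (rule VI_add[OF Dset_ind])
  moreover have "inner (v - projD v) (\<chi> j. if j \<le> k then 1 else 0) = psum (v - projD v) k"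
    unfolding inner_vec_def psum_def by (simp add: if_distrib sum.If_cases Collect_conj_eq[symmetric] atMost_def)
  ultimately show ?thesis unfolding lamv_def by simp
qed

lemma lamv_Max: "lamv v $ Max UNIV = 0"
proof -
  have "{..Max UNIV} = (UNIV::'a set)" for dummy :: "'a::{finite,wellorder}"
    using Max_ge_UNIV by auto
  then show ?thesis unfolding lamv_def psum_def using res_sum0[of v] by simp
qed

lemma bt_lamv: "bt (\<lambda>i. lamv v $ i) = v - projD v"
proof -
  have "(\<lambda>i. lamv v $ i) = psum (v - projD v)" unfolding lamv_def by simp
  then show ?thesis using bt_psum[OF res_sum0] by simp
qed

lemma inner_bt: "inner (bt c) x = (\<Sum>i\<in>brows. c i * inner (Brow i) x)"
  unfolding bt_def by (simp add: inner_sum_left)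

lemma lamv_compl: "(\<Sum>i\<in>brows. lamv v $ i * (Brow i \<bullet> projD v)) = 0"
  using inner_bt[of "\<lambda>i. lamv v $ i" "projD v"] bt_lamv[of v] res_inner0[of v] by simp

lemma Brow_projD_nonneg: "i \<in> brows \<Longrightarrow> Brow i \<bullet> projD v \<ge> 0"
  using projD_in[of v] nxt_gt[of i] by (simp add: inner_Brow Dset_iff)

lemma lamv_MD: "lamv v \<in> MD v"
  unfolding MD_def
  using lamv_Max[of v] bt_lamv[of v] lamv_compl[of v] Brow_projD_nonneg[of _ v] lamv_nonpos[of v]
  by (simp add: bt_def)

lemma MD_unique: "lam \<in> MD v \<Longrightarrow> lam = lamv v"
proof -
  assume lam: "lam \<in> MD v"
  then have "bt (\<lambda>i. lam $ i) = v - projD v" "lam $ Max UNIV = 0"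
    unfolding MD_def bt_def by (auto simp: algebra_simps)
  then have "bt (\<lambda>i. lam $ i) = bt (\<lambda>i. lamv v $ i)" by (simp add: bt_lamv)
  then have "lam $ k = lamv v $ k" for k
    using bt_eqD[of "\<lambda>i. lam $ i" "\<lambda>i. lamv v $ i" k] \<open>lam $ Max UNIV = 0\<close> lamv_Max[of v]
    by (cases "k \<in> brows") (auto simp: brows_iff)
  then show ?thesis by (simp add: vec_eq_iff)
qed

lemma MD_eq: "MD v = {lamv v}"
  using lamv_MD MD_unique by blast

lemma lamv_compl_each:
  assumes "i \<in> brows" "lamv v $ i \<noteq> 0"
  shows "Brow i \<bullet> projD v = 0"
proof -
  have nonpos: "\<forall>j\<in>brows. lamv v $ j * (Brow j \<bullet> projD v) \<le> 0"
    using lamv_nonpos[of v] Brow_projD_nonneg[of _ v] by (meson mult_nonpos_nonneg)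
  have "\<forall>j\<in>brows. - (lamv v $ j * (Brow j \<bullet> projD v)) = 0"
    using sum_nonneg_eq_0_iff[of brows "\<lambda>j. - (lamv v $ j * (Brow j \<bullet> projD v))"]
      lamv_compl[of v] nonpos by (simp add: sum_negf)
  then show ?thesis using assms by auto
qed

lemma lamv_supp_brows: "lamv v $ i \<noteq> 0 \<Longrightarrow> i \<in> brows"
  using lamv_Max[of v] by (auto simp: brows_iff)

lemma lamv_lip: "\<bar>lamv a $ k - lamv b $ k\<bar> \<le> 2 * real CARD('n) * norm (a - b)"
  for a b :: "real^'n::{finite,wellorder}"
proof -
  have "\<bar>lamv a $ k - lamv b $ k\<bar> = \<bar>\<Sum>j\<in>{..k}. (a - b)$j - (projD a - projD b)$j\<bar>"
    unfolding lamv_def psum_def by (simp add: sum_subtractf[symmetric] algebra_simps)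
  also have "\<dots> \<le> (\<Sum>j\<in>{..k}. \<bar>(a - b)$j - (projD a - projD b)$j\<bar>)"
    by (rule sum_abs)
  also have "\<dots> \<le> (\<Sum>j\<in>{..k}. 2 * norm (a - b))"
  proof (rule sum_mono)
    fix j
    have "\<bar>(a - b)$j\<bar> \<le> norm (a - b)" by (rule component_le_norm_cart)
    moreover have "\<bar>(projD a - projD b)$j\<bar> \<le> norm (projD a - projD b)" by (rule component_le_norm_cart)
    moreover have "norm (projD a - projD b) \<le> norm (a - b)" using projD_lip[of a b] by (simp add: dist_norm)
    ultimately show "\<bar>(a - b)$j - (projD a - projD b)$j\<bar> \<le> 2 * norm (a - b)" by linarith
  qed
  also have "\<dots> \<le> (\<Sum>j\<in>(UNIV::'n set). 2 * norm (a - b))"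
    by (rule sum_mono2) auto
  also have "\<dots> = 2 * real CARD('n) * norm (a - b)" by simp
  finally show ?thesis .
qed


declare transpose_matrix_vector[simp del]

lemma transpose_add: "transpose (A + B) = transpose A + transpose (B::'a::semiring_1^'n^'m)"
  by (simp add: transpose_def vec_eq_iff)

lemma transpose_diff: "transpose (A - B) = transpose A - transpose (B::'a::ring_1^'n^'m)"
  by (simp add: transpose_def vec_eq_iff)

lemma inner_transpose_mv: "inner (transpose A *v x) z = inner x (A *v (z::real^_))"
  by (simp add: transpose_matrix_vector dot_lmul_matrix)

lemma sym_by_inner:
  fixes A :: "real^'n^'n"
  assumes "\<And>x z. inner (A *v x) z = inner x (A *v z)"
  shows "transpose A = A"
proof -
  have "transpose A *v x = A *v x" for x
  proof -
    have "inner (transpose A *v x - A *v x) z = 0" for z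
      using assms[of x z] inner_transpose_mv[of A x z] by (simp add: inner_diff_left)
    from this[of "transpose A *v x - A *v x"] show ?thesis by simp
  qed
  then show ?thesis by (simp add: matrix_eq)
qed

lemma inner_sym_mv: "transpose A = A \<Longrightarrow> inner (A *v x) z = inner x (A *v (z::real^_))"
  using inner_transpose_mv[of A x z] by simp

lemma symidem_psd:
  fixes A :: "real^'n::{finite,wellorder}^'n::{finite,wellorder}"
  assumes "transpose A = A" "A ** A = A"
  shows "psd A"
  unfolding psd_def
proof
  fix x
  have "x \<bullet> (A *v x) = x \<bullet> (A *v (A *v x))" using assms(2) by (metis matrix_vector_mul_assoc)
  also have "\<dots> = (A *v x) \<bullet> (A *v x)" using inner_sym_mv[OF assms(1), of x "A *v x"] by simp
  finally show "0 \<le> x \<bullet> (A *v x)" by simp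
qed

lemma symidem_compl:
  fixes A :: "real^'n^'n"
  assumes "transpose A = A" "A ** A = A"
  shows "transpose (mat 1 - A) = mat 1 - A" "(mat 1 - A) ** (mat 1 - A) = mat 1 - A"
proof -
  show "transpose (mat 1 - A) = mat 1 - A" using assms by (simp add: transpose_diff)
  have "((mat 1 - A) ** (mat 1 - A)) *v x = (mat 1 - A) *v x" for x
  proof -
    have "A *v (A *v x) = A *v x" using assms(2) by (metis matrix_vector_mul_assoc)
    then show ?thesis by (simp add: matrix_vector_mul_assoc[symmetric] matrix_vector_mult_diff_rdistrib
        matrix_vector_mult_diff_distrib)
  qed
  then show "(mat 1 - A) ** (mat 1 - A) = mat 1 - A" by (simp add: matrix_eq)
qed

section \<open>The matrices B_K\<close>

lemma BK_nth: "BK K $ i = (if i \<in> K then Brow i else 0)"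
  unfolding BK_def by simp

lemma BK_mv: "BK K *v x = (\<chi> i. if i \<in> K then Brow i \<bullet> x else 0)"
  by (simp add: vec_eq_iff matrix_vector_mul_component BK_nth)

lemma BKT_mv: "transpose (BK K) *v m = (\<Sum>i\<in>K. m$i *\<^sub>R Brow i)"
proof -
  have "(transpose (BK K) *v m) $ j = (\<Sum>i\<in>K. m$i *\<^sub>R Brow i) $ j" for j
  proof -
    have "(transpose (BK K) *v m) $ j = (\<Sum>i\<in>UNIV. m$i * (BK K $ i $ j))"
      by (simp add: transpose_matrix_vector vector_matrix_mult_def mult.commute)
    also have "\<dots> = (\<Sum>i\<in>UNIV. (if i \<in> K then m$i * Brow i $ j else 0))"
      by (intro sum.cong) (auto simp: BK_nth)
    also have "\<dots> = (\<Sum>i\<in>K. m$i * Brow i $ j)"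
      by (simp add: sum.If_cases)
    finally show ?thesis by (simp add: sum_component)
  qed
  then show ?thesis by (simp add: vec_eq_iff)
qed

lemma BKT_bt:
  assumes "K \<subseteq> brows"
  shows "transpose (BK K) *v m = bt (\<lambda>i. if i \<in> K then m$i else 0)"
proof -
  have "bt (\<lambda>i. if i \<in> K then m$i else 0) = (\<Sum>i\<in>brows. if i \<in> K then m$i *\<^sub>R Brow i else 0)"
    unfolding bt_def by (intro sum.cong) auto
  also have "\<dots> = sum (\<lambda>i. m$i *\<^sub>R Brow i) {i\<in>brows. i \<in> K}"
    by (simp add: sum.inter_filter)
  also have "{i\<in>brows. i \<in> K} = K" using assms by auto
  finally show ?thesis by (simp add: BKT_mv)
qed

definition Emat :: "'n::{finite,wellorder} set \<Rightarrow> real^'n::{finite,wellorder}^'n::{finite,wellorder}" where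
  "Emat K = (\<chi> i j. if i = j \<and> i \<notin> K then 1 else 0)"

lemma Emat_mv: "Emat K *v m = (\<chi> i. if i \<notin> K then m$i else 0)"
proof -
  have "(Emat K *v m) $ i = (\<Sum>j\<in>UNIV. if j = i then (if i \<notin> K then m$j else 0) else 0)" for i
  proof -
    have "(Emat K *v m) $ i = (\<Sum>j\<in>UNIV. (if i = j \<and> i \<notin> K then 1 else 0) * m$j)"
      by (simp add: matrix_vector_mult_def Emat_def)
    also have "\<dots> = (\<Sum>j\<in>UNIV. if j = i then (if i \<notin> K then m$j else 0) else 0)"
      by (rule sum.cong) auto
    finally show ?thesis .
  qed
  then show ?thesis by (simp add: vec_eq_iff)
qed

definition Gm :: "'n::{finite,wellorder} set \<Rightarrow> real^'n::{finite,wellorder}^'n::{finite,wellorder}" where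
  "Gm K = BK K ** transpose (BK K) + Emat K"

lemma Gm_mv: "Gm K *v m = BK K *v (transpose (BK K) *v m) + Emat K *v m"
  by (simp add: Gm_def matrix_vector_mult_add_rdistrib matrix_vector_mul_assoc)

lemma BK_mv_out: "i \<notin> K \<Longrightarrow> (BK K *v x) $ i = 0"
  by (simp add: BK_mv)

lemma BKT_restrict: "transpose (BK K) *v (\<chi> i. if i \<in> K then m$i else 0) = transpose (BK K) *v m"
  by (simp add: BKT_mv cong: sum.cong)

lemma Gm_inj:
  assumes K: "K \<subseteq> brows" and m: "Gm K *v m = 0"
  shows "m = 0"
proof -
  have out: "m$i = 0" if "i \<notin> K" for i
    using arg_cong[OF m, of "\<lambda>v. v$i"] that by (simp add: Gm_mv Emat_mv BK_mv_out)
  then have "Emat K *v m = 0" by (simp add: Emat_mv vec_eq_iff)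
  then have z: "BK K *v (transpose (BK K) *v m) = 0" using m by (simp add: Gm_mv)
  have "inner (transpose (BK K) *v m) (transpose (BK K) *v m) = 0"
    using inner_transpose_mv[of "BK K" m "transpose (BK K) *v m"] z by simp
  then have "transpose (BK K) *v m = 0" by simp
  then have "bt (\<lambda>i. if i \<in> K then m$i else 0) = bt (\<lambda>i. 0)"
    using BKT_bt[OF K] by (simp add: bt_def)
  then have "m$i = 0" if "i \<in> K" for i
    using bt_eqD[of "\<lambda>i. if i \<in> K then m$i else 0" "\<lambda>i. 0" i] that K by auto
  with out show ?thesis by (auto simp: vec_eq_iff)
qed

lemma Gm_invertible: "K \<subseteq> brows \<Longrightarrow> invertible (Gm K)"
  using Gm_inj[of K] matrix_left_invertible_ker[of "Gm K"] invertible_left_inverse[of "Gm K"]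
  by blast

lemma matrix_inv_works:
  assumes "invertible (A::real^'n^'n)"
  shows "A ** matrix_inv A = mat 1" "matrix_inv A ** A = mat 1"
proof -
  have "\<exists>A'. A ** A' = mat 1 \<and> A' ** A = mat 1" using assms unfolding invertible_def by auto
  then have "A ** matrix_inv A = mat 1 \<and> matrix_inv A ** A = mat 1"
    unfolding matrix_inv_def by (rule someI_ex)
  then show "A ** matrix_inv A = mat 1" "matrix_inv A ** A = mat 1" by auto
qed

lemma Gm_sym: "transpose (Gm K) = Gm K"
proof -
  have "transpose (Emat K) = Emat K" by (auto simp: Emat_def transpose_def vec_eq_iff)
  then show ?thesis by (simp add: Gm_def transpose_add matrix_transpose_mul)
qed

lemma inv_sym:
  assumes "invertible (A::real^'n^'n)" "transpose A = A"
  shows "transpose (matrix_inv A) = matrix_inv A"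
proof -
  have "A ** transpose (matrix_inv A) = mat 1"
    using matrix_inv_works(2)[OF assms(1)] arg_cong[of _ _ transpose] assms(2)
    by (metis matrix_transpose_mul transpose_mat)
  then have "matrix_inv A ** (A ** transpose (matrix_inv A)) = matrix_inv A" by simp
  then show ?thesis using matrix_inv_works(2)[OF assms(1)] by (simp add: matrix_mul_assoc)
qed

abbreviation Ginv where "Ginv K \<equiv> matrix_inv (Gm K)"

lemma projK_eq: "projK K = mat 1 - transpose (BK K) ** Ginv K ** BK K"
  unfolding projK_def Gm_def Emat_def by simp

lemma projK_mv: "projK K *v x = x - transpose (BK K) *v (Ginv K *v (BK K *v x))"
  by (simp add: projK_eq matrix_vector_mult_diff_rdistrib matrix_vector_mul_assoc[symmetric])

lemma Ginv_mv: "K \<subseteq> brows \<Longrightarrow> Gm K *v (Ginv K *v r) = r"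
  by (metis matrix_inv_works(1)[OF Gm_invertible] matrix_vector_mul_assoc matrix_vector_mul_lid)

lemma Ginv_mv2: "K \<subseteq> brows \<Longrightarrow> Ginv K *v (Gm K *v r) = r"
  by (metis matrix_inv_works(2)[OF Gm_invertible] matrix_vector_mul_assoc matrix_vector_mul_lid)

lemma projK_Q1:
  assumes K: "K \<subseteq> brows"
  shows "BK K *v (projK K *v x) = 0"
proof -
  define r where "r = BK K *v x"
  define m where "m = Ginv K *v r"
  have Gm: "BK K *v (transpose (BK K) *v m) + Emat K *v m = r"
    using Ginv_mv[OF K, of r] unfolding m_def by (simp add: Gm_mv)
  have "m$i = 0" if "i \<notin> K" for i
    using arg_cong[OF Gm, of "\<lambda>v. v$i"] that by (simp add: Emat_mv BK_mv_out r_def)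
  then have "Emat K *v m = 0" by (simp add: Emat_mv vec_eq_iff)
  with Gm have "BK K *v (transpose (BK K) *v m) = r" by simp
  then show ?thesis by (simp add: projK_mv matrix_vector_mult_diff_distrib r_def[symmetric] m_def[symmetric])
qed

lemma projK_Q2: "BK K *v x = 0 \<Longrightarrow> projK K *v x = x"
  by (simp add: projK_mv)

lemma projK_Q3:
  assumes K: "K \<subseteq> brows"
  shows "projK K *v (transpose (BK K) *v m) = 0"
proof -
  define m' where "m' = (\<chi> i. if i \<in> K then m$i else 0)"
  have t: "transpose (BK K) *v m' = transpose (BK K) *v m" unfolding m'_def by (rule BKT_restrict)
  have "Emat K *v m' = 0" by (simp add: Emat_mv m'_def vec_eq_iff)
  then have "BK K *v (transpose (BK K) *v m) = Gm K *v m'" by (simp add: Gm_mv t)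
  then show ?thesis by (simp add: projK_mv Ginv_mv2[OF K] t)
qed

lemma projK_idem: "K \<subseteq> brows \<Longrightarrow> projK K ** projK K = projK K"
  by (simp add: matrix_eq matrix_vector_mul_assoc[symmetric] projK_Q2 projK_Q1)

lemma projK_sym:
  assumes K: "K \<subseteq> brows"
  shows "transpose (projK K) = projK K"
proof (rule sym_by_inner)
  fix x z
  have s: "transpose (Ginv K) = Ginv K" by (rule inv_sym[OF Gm_invertible[OF K] Gm_sym])
  have "inner (transpose (BK K) *v (Ginv K *v (BK K *v x))) z = inner (Ginv K *v (BK K *v x)) (BK K *v z)"
    by (rule inner_transpose_mv)
  also have "\<dots> = inner (BK K *v x) (Ginv K *v (BK K *v z))"
    by (rule inner_sym_mv[OF s])
  also have "\<dots> = inner x (transpose (BK K) *v (Ginv K *v (BK K *v z)))"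
    using inner_transpose_mv[of "BK K" "Ginv K *v (BK K *v z)" x] by (simp add: inner_commute)
  finally show "inner (projK K *v x) z = inner x (projK K *v z)"
    by (simp add: projK_mv inner_diff_left inner_diff_right)
qed

lemma projK_fix: "K \<subseteq> brows \<Longrightarrow> projK K *v x = x \<longleftrightarrow> BK K *v x = 0"
  using projK_Q1[of K x] projK_Q2[of K x] by metis


lemma rearr_aux:
  fixes a t :: "'a::linorder \<Rightarrow> real"
  assumes "finite I" "bij_betw \<pi> I I"
    and "\<forall>i\<in>I. \<forall>j\<in>I. i \<le> j \<longrightarrow> a j \<le> a i"
    and "\<forall>i\<in>I. \<forall>j\<in>I. i \<le> j \<longrightarrow> t j \<le> t i"
  shows "(\<Sum>i\<in>I. t (\<pi> i) * a i) \<le> (\<Sum>i\<in>I. t i * a i)"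
  using assms
proof (induction "card I" arbitrary: I \<pi>)
  case 0
  then show ?case by simp
next
  case (Suc k)
  then have ne: "I \<noteq> {}" by auto
  define m where "m = Max I"
  have mI: "m \<in> I" using Suc ne by (simp add: m_def)
  have mmax: "i \<le> m" if "i \<in> I" for i using Suc that by (simp add: m_def)
  obtain j where jI: "j \<in> I" and pj: "\<pi> j = m"
    using Suc(4) mI by (metis bij_betw_def imageE)
  have pmI: "\<pi> m \<in> I" using Suc(4) mI by (metis bij_betwE)
  define \<pi>' where "\<pi>' = \<pi> \<circ> Transposition.transpose j m"
  have bij': "bij_betw \<pi>' I I"
    unfolding \<pi>'_def
    by (rule bij_betw_trans[OF permutes_imp_bij[OF permutes_swap_id[OF jI mI]] Suc(4)])
  have p'm: "\<pi>' m = m" by (simp add: \<pi>'_def pj)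
  have bijr: "bij_betw \<pi>' (I - {m}) (I - {m})"
    by (rule bij_betw_DiffI[OF bij']) (auto simp: p'm mI)
  have IH: "(\<Sum>i\<in>I - {m}. t (\<pi>' i) * a i) \<le> (\<Sum>i\<in>I - {m}. t i * a i)"
    using Suc(1)[of "I - {m}" \<pi>'] Suc(2,3,5,6) bijr mI by auto
  have step: "(\<Sum>i\<in>I. t (\<pi> i) * a i) \<le> (\<Sum>i\<in>I. t (\<pi>' i) * a i)"
  proof (cases "j = m")
    case True
    then have "\<pi>' = \<pi>" by (simp add: \<pi>'_def)
    then show ?thesis by simp
  next
    case False
    have eq: "(\<Sum>i\<in>I - {j, m}. t (\<pi> i) * a i) = (\<Sum>i\<in>I - {j, m}. t (\<pi>' i) * a i)"
      by (intro sum.cong) (auto simp: \<pi>'_def transpose_apply_other)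
    have split: "(\<Sum>i\<in>I. f i) = f j + f m + (\<Sum>i\<in>I - {j, m}. f i)" for f :: "'a \<Rightarrow> real"
    proof -
      have "(\<Sum>i\<in>I. f i) = f j + (\<Sum>i\<in>I - {j}. f i)" using Suc(3) jI by (simp add: sum.remove)
      also have "(\<Sum>i\<in>I - {j}. f i) = f m + (\<Sum>i\<in>I - {j} - {m}. f i)"
        using Suc(3) mI False by (simp add: sum.remove)
      also have "I - {j} - {m} = I - {j, m}" by auto
      finally show ?thesis by simp
    qed
    have "t (\<pi> m) \<ge> t m" using Suc(6) pmI mI mmax[OF pmI] by blast
    moreover have "a j \<ge> a m" using Suc(5) jI mI mmax[OF jI] by blast
    ultimately have "0 \<le> (t (\<pi> m) - t m) * (a j - a m)" by simp
    then have "t m * a j + t (\<pi> m) * a m \<le> t (\<pi> m) * a j + t m * a m"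
      by (simp add: algebra_simps)
    moreover have p'j: "\<pi>' j = \<pi> m" using False by (simp add: \<pi>'_def)
    define R where "R = (\<Sum>i\<in>I - {j, m}. t (\<pi> i) * a i)"
    have A: "(\<Sum>i\<in>I. t (\<pi> i) * a i) = t m * a j + t (\<pi> m) * a m + R"
      using split[of "\<lambda>i. t (\<pi> i) * a i"] pj by (simp add: R_def)
    have B: "(\<Sum>i\<in>I. t (\<pi>' i) * a i) = t (\<pi> m) * a j + t m * a m + R"
      using split[of "\<lambda>i. t (\<pi>' i) * a i"] p'm p'j eq by (simp add: R_def)
    ultimately show ?thesis unfolding A B by linarith
  qed
  have "(\<Sum>i\<in>I. t (\<pi>' i) * a i) = t m * a m + (\<Sum>i\<in>I - {m}. t (\<pi>' i) * a i)"
    using Suc(3) mI p'm by (simp add: sum.remove)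
  also have "\<dots> \<le> t m * a m + (\<Sum>i\<in>I - {m}. t i * a i)" using IH by simp
  also have "\<dots> = (\<Sum>i\<in>I. t i * a i)" using Suc(3) mI by (simp add: sum.remove)
  finally show ?case using step by simp
qed

lemma permmat_mv: "permmat \<tau> *v x = (\<chi> i. x $ \<tau> i)"
proof -
  have "(permmat \<tau> *v x) $ i = x $ \<tau> i" for i
  proof -
    have "(permmat \<tau> *v x) $ i = (\<Sum>j\<in>UNIV. (if \<tau> i = j then 1 else 0) * x$j)"
      by (simp add: matrix_vector_mult_def permmat_def)
    also have "\<dots> = (\<Sum>j\<in>UNIV. if \<tau> i = j then x$j else 0)"
      by (intro sum.cong) auto
    also have "\<dots> = x $ \<tau> i" by simp
    finally show ?thesis .
  qed
  then show ?thesis by (simp add: vec_eq_iff)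
qed

lemma permmatT_mv:
  assumes "\<tau> permutes UNIV"
  shows "transpose (permmat \<tau>) *v x = (\<chi> i. x $ inv \<tau> i)"
proof -
  have "(transpose (permmat \<tau>) *v x) $ i = x $ inv \<tau> i" for i
  proof -
    have "(transpose (permmat \<tau>) *v x) $ i = (\<Sum>j\<in>UNIV. (if \<tau> j = i then 1 else 0) * x$j)"
      by (simp add: transpose_def matrix_vector_mult_def permmat_def)
    also have "\<dots> = (\<Sum>j\<in>UNIV. if \<tau> j = i then x$j else 0)"
      by (intro sum.cong) auto
    also have "\<dots> = (\<Sum>j\<in>UNIV. if inv \<tau> i = j then x$j else 0)"
      by (simp add: permutes_inv_eq[OF assms])
    finally show ?thesis by simp
  qed
  then show ?thesis by (simp add: vec_eq_iff)
qed

lemma permmat_orth: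
  assumes "\<tau> permutes UNIV"
  shows "transpose (permmat \<tau>) ** permmat \<tau> = mat 1" "permmat \<tau> ** transpose (permmat \<tau>) = mat 1"
  by (simp_all add: matrix_eq matrix_vector_mul_assoc[symmetric] permmat_mv permmatT_mv[OF assms]
      permutes_inverses[OF assms])

lemma permmat_TP: "\<tau> permutes UNIV \<Longrightarrow> transpose (permmat \<tau>) *v (permmat \<tau> *v x) = x"
  by (simp add: permmat_mv permmatT_mv permutes_inverses)

lemma permmat_PT: "\<tau> permutes UNIV \<Longrightarrow> permmat \<tau> *v (transpose (permmat \<tau>) *v x) = x"
  by (simp add: permmat_mv permmatT_mv permutes_inverses)

lemma sum_perm: "\<tau> permutes UNIV \<Longrightarrow> (\<Sum>i\<in>UNIV. f (\<tau> i)) = (\<Sum>i\<in>UNIV. f i)"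
  using sum.reindex_bij_betw[OF permutes_imp_bij, of \<tau> UNIV f] by simp

lemma inner_perm: "\<tau> permutes UNIV \<Longrightarrow> inner (permmat \<tau> *v x) (permmat \<tau> *v z) = inner x (z::real^_)"
  unfolding permmat_mv inner_vec_def using sum_perm[of \<tau> "\<lambda>i. x$i * z$i"] by simp

lemma norm_perm: "\<tau> permutes UNIV \<Longrightarrow> norm (permmat \<tau> *v x) = norm (x::real^_)"
  using inner_perm[of \<tau> x x] by (simp add: norm_eq_sqrt_inner)

lemma pairpen_sym: "pairpen x = (1/2) * (\<Sum>i\<in>UNIV. \<Sum>j\<in>UNIV. \<bar>x$i - x$j\<bar>)"
proof -
  have a: "(\<Sum>i\<in>UNIV. \<Sum>j\<in>UNIV. \<bar>x$i - x$j\<bar>) =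
     (\<Sum>i\<in>UNIV. \<Sum>j\<in>UNIV. (if i < j then \<bar>x$i - x$j\<bar> else 0)) +
     (\<Sum>i\<in>UNIV. \<Sum>j\<in>UNIV. (if j < i then \<bar>x$i - x$j\<bar> else 0))"
    by (simp add: sum.distrib[symmetric], intro sum.cong) (auto simp: not_less_iff_gr_or_eq)
  have b: "(\<Sum>i\<in>UNIV. \<Sum>j\<in>UNIV. (if j < i then \<bar>x$i - x$j\<bar> else 0)) =
     (\<Sum>i\<in>UNIV. \<Sum>j\<in>UNIV. (if i < j then \<bar>x$i - x$j\<bar> else 0))"
    by (subst sum.swap) (rule sum.cong[OF refl], rule sum.cong[OF refl], simp add: abs_minus_commute)
  have c: "pairpen x = (\<Sum>i\<in>UNIV. \<Sum>j\<in>UNIV. (if i < j then \<bar>x$i - x$j\<bar> else 0))"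
    unfolding pairpen_def by (simp add: sum.If_cases)
  show ?thesis using a b c by simp
qed

lemma pairpen_perm:
  assumes "\<tau> permutes UNIV"
  shows "pairpen (permmat \<tau> *v x) = pairpen x"
proof -
  have "(\<Sum>i\<in>UNIV. \<Sum>j\<in>UNIV. \<bar>x$\<tau> i - x$\<tau> j\<bar>) = (\<Sum>i\<in>UNIV. \<Sum>j\<in>UNIV. \<bar>x$i - x$\<tau> j\<bar>)"
    using sum_perm[OF assms, of "\<lambda>i. \<Sum>j\<in>UNIV. \<bar>x$i - x$\<tau> j\<bar>"] by simp
  also have "\<dots> = (\<Sum>i\<in>UNIV. \<Sum>j\<in>UNIV. \<bar>x$i - x$j\<bar>)"
    by (rule sum.cong[OF refl], rule sum_perm[OF assms])
  finally show ?thesis by (simp add: pairpen_sym permmat_mv)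
qed

lemma l1_perm:
  assumes "\<tau> permutes UNIV"
  shows "l1norm (permmat \<tau> *v x) = l1norm x"
  unfolding l1norm_def permmat_mv using sum_perm[OF assms, of "\<lambda>i. \<bar>x$i\<bar>"] by simp

lemma card_gt: "real (card {j. (i::'n::{finite,wellorder}) < j}) = real CARD('n) - 1 - real (card {j. j < i})"
proof -
  have "UNIV = {j. j < i} \<union> ({i} \<union> {j. i < j})" by auto
  then have "CARD('n) = card ({j. j < i} \<union> ({i} \<union> {j. i < j}))" by simp
  also have "\<dots> = card {j. j < i} + (1 + card {j. i < j})"
    by (subst card_Un_disjoint; auto simp: card_Un_disjoint)
  finally show ?thesis by simp
qed

lemma pairpen_sorted:
  assumes "x \<in> Dset"
  shows "pairpen x = inner wvec x"
proof -
  have "pairpen x = (\<Sum>i\<in>UNIV. \<Sum>j\<in>{j\<in>UNIV. i < j}. x$i - x$j)"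
    unfolding pairpen_def using assms by (intro sum.cong) (auto simp: Dset_iff)
  also have "\<dots> = (\<Sum>i\<in>UNIV. real (card {j. i < j}) * x$i) - (\<Sum>i\<in>UNIV. \<Sum>j\<in>{j\<in>UNIV. i < j}. x$j)"
    by (simp add: sum_subtractf sum.distrib)
  also have "(\<Sum>i\<in>UNIV. \<Sum>j\<in>{j\<in>UNIV. i < j}. x$j) = (\<Sum>j\<in>UNIV. \<Sum>i\<in>{i\<in>UNIV. i < j}. x$j)"
    by (rule sum.swap_restrict) auto
  also have "\<dots> = (\<Sum>j\<in>UNIV. real (card {i. i < j}) * x$j)" by simp
  finally have "pairpen x = (\<Sum>i\<in>UNIV. (real (card {j. i < j}) - real (card {j. j < i})) * x$i)"
    by (simp add: sum_subtractf left_diff_distrib)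
  also have "\<dots> = inner wvec x"
    unfolding inner_vec_def wvec_def by (intro sum.cong) (auto simp: card_gt)
  finally show ?thesis .
qed

lemma rearr:
  assumes "a \<in> Dset" "t \<in> Dset" "\<tau> permutes UNIV"
  shows "inner (permmat \<tau> *v t) a \<le> inner t (a::real^'n::{finite,wellorder})"
  using rearr_aux[of UNIV \<tau> "\<lambda>i. a$i" "\<lambda>i. t$i"] assms permutes_imp_bij[OF assms(3)]
  unfolding inner_vec_def permmat_mv Dset_iff by simp

lemma sorted_unique:
  assumes "s \<in> Dset" "t \<in> Dset" "\<tau> permutes UNIV" "t = permmat \<tau> *v s"
  shows "t = (s::real^'n::{finite,wellorder})"
proof -
  have "inner t t \<le> inner s t" using rearr[OF assms(2,1,3)] assms(4) by simp
  moreover have "inner t t = inner s s" using inner_perm[OF assms(3), of s s] assms(4) by simp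
  ultimately have "inner (s - t) (s - t) \<le> 0" by (simp add: inner_diff inner_commute)
  then have "inner (s - t) (s - t) = 0" using inner_ge_zero[of "s - t"] by linarith
  then show ?thesis by simp
qed


lemma midpoint_norm:
  fixes a b :: "'a::real_inner"
  shows "(norm ((1/2) *\<^sub>R (a + b)))\<^sup>2 = (norm a)\<^sup>2 / 2 + (norm b)\<^sup>2 / 2 - (norm (a - b))\<^sup>2 / 4"
  unfolding power2_norm_eq_inner
  by (simp add: inner_add_left inner_add_right inner_diff_left inner_diff_right inner_commute field_simps)

lemma prox_eqI:
  fixes f :: "real^'n::{finite,wellorder} \<Rightarrow> real"
  assumes mc: "\<And>a b. f ((1/2) *\<^sub>R (a + b)) \<le> (f a + f b) / 2"
    and min: "\<And>z. (1/2) * (norm (x - y))\<^sup>2 + f x \<le> (1/2) * (norm (z - y))\<^sup>2 + f z"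
  shows "prox f y = x"
proof -
  define obj where "obj z = (1/2) * (norm (z - y))\<^sup>2 + f z" for z
  have "\<forall>z. obj (prox f y) \<le> obj z"
    unfolding prox_def obj_def by (rule someI[of _ x]) (use min in auto)
  then have x': "obj (prox f y) \<le> obj x" by auto
  define m where "m = (1/2) *\<^sub>R (x + prox f y)"
  have "m - y = (1/2) *\<^sub>R ((x - y) + (prox f y - y))" by (simp add: m_def vec_eq_iff field_simps)
  then have nm: "(norm (m - y))\<^sup>2 = (norm (x - y))\<^sup>2 / 2 + (norm (prox f y - y))\<^sup>2 / 2 - (norm (x - prox f y))\<^sup>2 / 4"
    using midpoint_norm[of "x - y" "prox f y - y"] by simp
  have mcm: "f m \<le> (f x + f (prox f y)) / 2" using mc[of x "prox f y"] by (simp add: m_def)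
  have "obj x \<le> obj m" using min unfolding obj_def by auto
  also have "obj m \<le> (obj x + obj (prox f y)) / 2 - (norm (x - prox f y))\<^sup>2 / 8"
    using nm mcm unfolding obj_def by (simp add: field_simps)
  finally have A: "obj x \<le> (obj x + obj (prox f y)) / 2 - (norm (x - prox f y))\<^sup>2 / 8" .
  have A': "obj x * 8 + 2 * (norm (x - prox f y))\<^sup>2 \<le> obj (prox f y) * 8" using A by (simp add: field_simps)
  have "(norm (x - prox f y))\<^sup>2 \<le> 0" using A' x' by linarith
  then show ?thesis by simp
qed

lemma pairpen_mc: "pairpen ((1/2) *\<^sub>R (a + b)) \<le> (pairpen a + pairpen b) / 2"
proof -
  have "pairpen ((1/2) *\<^sub>R (a + b)) \<le> (\<Sum>i\<in>UNIV. \<Sum>j\<in>{j. i < j}. (\<bar>a$i - a$j\<bar> + \<bar>b$i - b$j\<bar>) / 2)"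
    unfolding pairpen_def
  proof (intro sum_mono)
    fix i j
    have e: "((1/2) *\<^sub>R (a + b))$i - ((1/2) *\<^sub>R (a + b))$j = ((a$i - a$j) + (b$i - b$j)) / 2"
      by (simp add: field_simps)
    have "\<bar>((1/2) *\<^sub>R (a + b))$i - ((1/2) *\<^sub>R (a + b))$j\<bar> = \<bar>(a$i - a$j) + (b$i - b$j)\<bar> / 2"
      unfolding e by (simp add: abs_divide)
    also have "\<dots> \<le> (\<bar>a$i - a$j\<bar> + \<bar>b$i - b$j\<bar>) / 2"
      by (intro divide_right_mono abs_triangle_ineq) simp
    finally show "\<bar>((1/2) *\<^sub>R (a + b))$i - ((1/2) *\<^sub>R (a + b))$j\<bar> \<le> (\<bar>a$i - a$j\<bar> + \<bar>b$i - b$j\<bar>) / 2" .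
  qed
  also have "\<dots> = (pairpen a + pairpen b) / 2"
    unfolding pairpen_def by (simp add: sum_divide_distrib[symmetric] sum.distrib)
  finally show ?thesis .
qed

lemma l1_mc: "l1norm ((1/2) *\<^sub>R (a + b)) \<le> (l1norm a + l1norm b) / 2"
proof -
  have "l1norm ((1/2) *\<^sub>R (a + b)) \<le> (\<Sum>i\<in>UNIV. (\<bar>a$i\<bar> + \<bar>b$i\<bar>) / 2)"
    unfolding l1norm_def
  proof (intro sum_mono)
    fix i
    show "\<bar>((1/2) *\<^sub>R (a + b))$i\<bar> \<le> (\<bar>a$i\<bar> + \<bar>b$i\<bar>) / 2"
      using abs_triangle_ineq[of "a$i" "b$i"] by simp
  qed
  also have "\<dots> = (l1norm a + l1norm b) / 2"
    unfolding l1norm_def by (simp add: sum_divide_distrib[symmetric] sum.distrib)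
  finally show ?thesis .
qed

lemma obj_shift:
  fixes t a w :: "'a::real_inner"
  shows "(1/2) * (norm (t - a))\<^sup>2 + \<rho> * inner w t
     = (1/2) * (norm (t - (a - \<rho> *\<^sub>R w)))\<^sup>2 + \<rho> * inner w a - (1/2) * \<rho>\<^sup>2 * (norm w)\<^sup>2"
  unfolding power2_norm_eq_inner
  by (simp add: inner_add_left inner_add_right inner_diff_left inner_diff_right inner_commute
      algebra_simps power2_eq_square)

definition sorter :: "(real^'n::{finite,wellorder} \<Rightarrow> 'n \<Rightarrow> 'n) \<Rightarrow> bool" where
  "sorter \<sigma> \<longleftrightarrow> (\<forall>z. \<sigma> z permutes UNIV \<and> permmat (\<sigma> z) *v z \<in> Dset)"

lemma sorts_Dset: "(\<forall>i j. i \<le> j \<longrightarrow> z $ (\<tau> j) \<le> z $ (\<tau> i)) \<longleftrightarrow> permmat \<tau> *v z \<in> Dset"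
  by (simp add: permmat_mv Dset_iff)

lemma sort_bound:
  assumes srt: "sorter \<sigma>" and tau: "\<tau> permutes UNIV" and ya: "permmat \<tau> *v y \<in> Dset"
  shows "(norm (permmat (\<sigma> z) *v z - permmat \<tau> *v y))\<^sup>2 \<le> (norm (z - y))\<^sup>2"
proof -
  define t where "t = permmat (\<sigma> z) *v z"
  define a where "a = permmat \<tau> *v y"
  have sz: "\<sigma> z permutes UNIV" and tD: "t \<in> Dset" using srt by (auto simp: sorter_def t_def)
  define \<omega> where "\<omega> = inv (\<sigma> z) \<circ> \<tau>"
  have om: "\<omega> permutes UNIV" unfolding \<omega>_def by (intro permutes_compose tau permutes_inv sz)
  have Pz: "permmat \<tau> *v z = permmat \<omega> *v t"
    by (simp add: vec_eq_iff permmat_mv t_def \<omega>_def permutes_inverses[OF sz])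
  have "inner (permmat \<tau> *v z) a \<le> inner t a"
    unfolding Pz by (rule rearr) (use ya tD om in \<open>auto simp: a_def\<close>)
  moreover have "norm (permmat \<tau> *v z) = norm t" using norm_perm[OF tau] norm_perm[OF sz] by (simp add: t_def)
  moreover have "norm (z - y) = norm (permmat \<tau> *v z - a)"
    using norm_perm[OF tau, of "z - y"] by (simp add: a_def matrix_vector_mult_diff_distrib)
  ultimately show ?thesis unfolding t_def[symmetric] a_def[symmetric]
  proof -
    assume h1: "inner (permmat \<tau> *v z) a \<le> inner t a" and h2: "norm (permmat \<tau> *v z) = norm t"
      and h3: "norm (z - y) = norm (permmat \<tau> *v z - a)"
    have h4: "inner (permmat \<tau> *v z) (permmat \<tau> *v z) = inner t t"
      using h2 by (metis power2_norm_eq_inner)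
    have "(norm (t - a))\<^sup>2 \<le> (norm (permmat \<tau> *v z - a))\<^sup>2"
      unfolding power2_norm_eq_inner
      using h1 h4 by (simp add: inner_diff_left inner_diff_right inner_commute)
    then show "(norm (t - a))\<^sup>2 \<le> (norm (z - y))\<^sup>2" using h3 by simp
  qed
qed

lemma projD_le: "t \<in> Dset \<Longrightarrow> norm (projD v - v) \<le> norm (t - v)"
  using closest_point_le[OF closed_Dset, of t v] unfolding projD_def by (simp add: dist_norm norm_minus_commute)

lemma Sfun_formula:
  fixes \<sigma> :: "real^'n::{finite,wellorder} \<Rightarrow> 'n::{finite,wellorder} \<Rightarrow> 'n::{finite,wellorder}" and y :: "real^'n::{finite,wellorder}"
  assumes srt: "sorter \<sigma>" and tau: "\<tau> permutes UNIV" and ya: "permmat \<tau> *v y \<in> Dset"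
    and rho: "\<rho> \<ge> 0"
  shows "Sfun \<rho> y = transpose (permmat \<tau>) *v projD (permmat \<tau> *v y - \<rho> *\<^sub>R wvec)"
  unfolding Sfun_def
proof (rule prox_eqI)
  fix a b
  show "\<rho> * pairpen ((1/2) *\<^sub>R (a + b)) \<le> (\<rho> * pairpen a + \<rho> * pairpen b) / 2"
    using mult_left_mono[OF pairpen_mc rho, of a b] by (simp add: algebra_simps)
next
  fix z
  define a where "a = permmat \<tau> *v y"
  define v where "v = a - \<rho> *\<^sub>R wvec"
  define s where "s = transpose (permmat \<tau>) *v projD v"
  define t where "t = permmat (\<sigma> z) *v z"
  have sz: "\<sigma> z permutes UNIV" and tD: "t \<in> Dset" using srt by (auto simp: sorter_def t_def)
  have Ps: "permmat \<tau> *v s = projD v" by (simp add: s_def permmat_PT[OF tau])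
  have ns: "norm (s - y) = norm (projD v - a)"
    using norm_perm[OF tau, of "s - y"] by (simp add: Ps a_def matrix_vector_mult_diff_distrib)
  have ps: "pairpen s = inner wvec (projD v)"
    using pairpen_perm[OF tau, of s] Ps pairpen_sorted[OF projD_in, of v] by metis
  have pz: "pairpen z = inner wvec t"
    using pairpen_perm[OF sz, of z] pairpen_sorted[OF tD] by (simp add: t_def)
  have nz: "(norm (t - a))\<^sup>2 \<le> (norm (z - y))\<^sup>2"
    using sort_bound[OF srt tau ya, of z] by (simp add: t_def a_def)
  have "(1/2) * (norm (s - y))\<^sup>2 + \<rho> * pairpen s
      = (1/2) * (norm (projD v - v))\<^sup>2 + \<rho> * inner wvec a - (1/2) * \<rho>\<^sup>2 * (norm (wvec::real^'n::{finite,wellorder}))\<^sup>2"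
    unfolding ns ps v_def power2_norm_eq_inner
    by (simp add: inner_add_left inner_add_right inner_diff_left inner_diff_right inner_commute
      algebra_simps power2_eq_square)
  also have "\<dots> \<le> (1/2) * (norm (t - v))\<^sup>2 + \<rho> * inner wvec a - (1/2) * \<rho>\<^sup>2 * (norm (wvec::real^'n::{finite,wellorder}))\<^sup>2"
    using projD_le[OF tD, of v] by (simp add: power_mono)
  also have "\<dots> = (1/2) * (norm (t - a))\<^sup>2 + \<rho> * inner wvec t"
    unfolding v_def power2_norm_eq_inner
    by (simp add: inner_add_left inner_add_right inner_diff_left inner_diff_right inner_commute
      algebra_simps power2_eq_square)
  also have "\<dots> \<le> (1/2) * (norm (z - y))\<^sup>2 + \<rho> * pairpen z"
    using nz pz by simp
  finally show "(1/2) * (norm (s - y))\<^sup>2 + \<rho> * pairpen s \<le> (1/2) * (norm (z - y))\<^sup>2 + \<rho> * pairpen z" .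
qed

definition softf :: "real \<Rightarrow> real \<Rightarrow> real" where
  "softf \<beta> c = (if c > \<beta> then c - \<beta> else if c < -\<beta> then c + \<beta> else 0)"

definition soft :: "real \<Rightarrow> real^'n::{finite,wellorder} \<Rightarrow> real^'n::{finite,wellorder}" where
  "soft \<beta> c = (\<chi> i. softf \<beta> (c$i))"

lemma softf_mono: "\<beta> \<ge> 0 \<Longrightarrow> c \<le> c' \<Longrightarrow> softf \<beta> c \<le> softf \<beta> c'"
  unfolding softf_def by auto

lemma clip_mono: "\<beta> \<ge> 0 \<Longrightarrow> c \<le> c' \<Longrightarrow> c - softf \<beta> c \<le> c' - softf \<beta> c'"
  unfolding softf_def by auto

lemma clip_abs: "\<beta> \<ge> 0 \<Longrightarrow> \<bar>c - softf \<beta> c\<bar> \<le> \<beta>"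
  unfolding softf_def by auto

lemma clip_mul: "\<beta> \<ge> 0 \<Longrightarrow> (c - softf \<beta> c) * softf \<beta> c = \<beta> * \<bar>softf \<beta> c\<bar>"
  unfolding softf_def by (auto simp: algebra_simps)

lemma soft_D: "\<beta> \<ge> 0 \<Longrightarrow> x \<in> Dset \<Longrightarrow> soft \<beta> x \<in> Dset"
  unfolding soft_def Dset_iff by (auto intro: softf_mono)

lemma clip_D: "\<beta> \<ge> 0 \<Longrightarrow> x \<in> Dset \<Longrightarrow> x - soft \<beta> x \<in> Dset"
  unfolding soft_def Dset_iff by (auto intro: clip_mono)

lemma clip_inner_le:
  assumes b: "\<beta> \<ge> 0"
  shows "inner (x - soft \<beta> x) t \<le> \<beta> * l1norm t"
proof -
  have h: "(x$i - softf \<beta> (x$i)) * t$i \<le> \<beta> * \<bar>t$i\<bar>" for i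
  proof -
    have "(x$i - softf \<beta> (x$i)) * t$i \<le> \<bar>x$i - softf \<beta> (x$i)\<bar> * \<bar>t$i\<bar>"
      by (metis abs_ge_self abs_mult)
    also have "\<dots> \<le> \<beta> * \<bar>t$i\<bar>" by (intro mult_right_mono clip_abs b) simp
    finally show ?thesis .
  qed
  have "inner (x - soft \<beta> x) t = (\<Sum>i\<in>UNIV. (x$i - softf \<beta> (x$i)) * t$i)"
    by (simp add: inner_vec_def soft_def)
  also have "\<dots> \<le> (\<Sum>i\<in>UNIV. \<beta> * \<bar>t$i\<bar>)" by (rule sum_mono) (rule h)
  also have "\<dots> = \<beta> * l1norm t" by (simp add: l1norm_def sum_distrib_left)
  finally show ?thesis .
qed

lemma clip_inner_eq:
  assumes b: "\<beta> \<ge> 0"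
  shows "inner (x - soft \<beta> x) (soft \<beta> x) = \<beta> * l1norm (soft \<beta> x)"
proof -
  have "inner (x - soft \<beta> x) (soft \<beta> x) = (\<Sum>i\<in>UNIV. (x$i - softf \<beta> (x$i)) * softf \<beta> (x$i))"
    by (simp add: inner_vec_def soft_def)
  also have "\<dots> = (\<Sum>i\<in>UNIV. \<beta> * \<bar>softf \<beta> (x$i)\<bar>)" by (intro sum.cong refl clip_mul b)
  also have "\<dots> = \<beta> * l1norm (soft \<beta> x)" by (simp add: l1norm_def sum_distrib_left soft_def)
  finally show ?thesis .
qed

lemma penp_mc:
  assumes "\<beta> \<ge> 0" "\<rho> \<ge> 0"
  shows "penp \<beta> \<rho> ((1/2) *\<^sub>R (a + b)) \<le> (penp \<beta> \<rho> a + penp \<beta> \<rho> b) / 2"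
  using mult_left_mono[OF pairpen_mc assms(2), of a b] mult_left_mono[OF l1_mc assms(1), of a b]
  unfolding penp_def by (simp add: algebra_simps)

lemma key_soft:
  assumes b: "\<beta> \<ge> 0" and tD: "t \<in> Dset"
  shows "(1/2) * (norm (soft \<beta> (projD v) - v))\<^sup>2 + \<beta> * l1norm (soft \<beta> (projD v))
       \<le> (1/2) * (norm (t - v))\<^sup>2 + \<beta> * l1norm t"
proof -
  define P where "P = projD v"
  define r where "r = soft \<beta> P"
  define d where "d = P - r"
  have i1: "inner (P - v) (t - P) \<ge> 0"
    using projD_VI[OF tD, of v] unfolding P_def by (simp add: inner_diff_left inner_diff_right)
  have dD: "d \<in> Dset" unfolding d_def r_def P_def by (rule clip_D[OF b projD_in])
  have i2: "inner (P - v) d \<ge> 0"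
    using VI_add[OF dD, of v] unfolding P_def by (simp add: inner_diff_left inner_diff_right)
  have i3: "inner d t \<le> \<beta> * l1norm t" unfolding d_def r_def by (rule clip_inner_le[OF b])
  have i4: "inner d r = \<beta> * l1norm r" unfolding d_def r_def by (rule clip_inner_eq[OF b])
  define X where "X = inner (P - v) (t - P) + inner (P - v) d - inner d t + inner d r"
  have id: "(norm (t - v))\<^sup>2 = (norm (r - v))\<^sup>2 + 2 * X + (norm (t - r))\<^sup>2"
    unfolding power2_norm_eq_inner d_def X_def
    by (simp add: inner_diff_left inner_diff_right inner_commute algebra_simps)
  have X: "X \<ge> \<beta> * l1norm r - \<beta> * l1norm t" unfolding X_def using i1 i2 i3 i4 by linarith
  have "0 \<le> (norm (t - r))\<^sup>2" by simp
  then have "(norm (r - v))\<^sup>2 + 2 * (\<beta> * l1norm r) \<le> (norm (t - v))\<^sup>2 + 2 * (\<beta> * l1norm t)"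
    using id X by linarith
  then show ?thesis unfolding r_def[symmetric] P_def[symmetric] by linarith
qed

lemma prox_formula:
  fixes \<sigma> :: "real^'n::{finite,wellorder} \<Rightarrow> 'n::{finite,wellorder} \<Rightarrow> 'n::{finite,wellorder}" and y :: "real^'n::{finite,wellorder}"
  assumes srt: "sorter \<sigma>" and tau: "\<tau> permutes UNIV" and ya: "permmat \<tau> *v y \<in> Dset"
    and rho: "\<rho> \<ge> 0" and b: "\<beta> \<ge> 0"
  shows "prox (penp \<beta> \<rho>) y = transpose (permmat \<tau>) *v soft \<beta> (projD (permmat \<tau> *v y - \<rho> *\<^sub>R wvec))"
proof (rule prox_eqI)
  fix a b
  show "penp \<beta> \<rho> ((1/2) *\<^sub>R (a + b)) \<le> (penp \<beta> \<rho> a + penp \<beta> \<rho> b) / 2"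
    by (rule penp_mc[OF \<open>\<beta> \<ge> 0\<close> rho])
next
  fix z
  define a where "a = permmat \<tau> *v y"
  define v where "v = a - \<rho> *\<^sub>R wvec"
  define r where "r = soft \<beta> (projD v)"
  define s where "s = transpose (permmat \<tau>) *v r"
  define t where "t = permmat (\<sigma> z) *v z"
  have sz: "\<sigma> z permutes UNIV" and tD: "t \<in> Dset" using srt by (auto simp: sorter_def t_def)
  have rD: "r \<in> Dset" unfolding r_def by (rule soft_D[OF b projD_in])
  have Ps: "permmat \<tau> *v s = r" by (simp add: s_def permmat_PT[OF tau])
  have ns: "norm (s - y) = norm (r - a)"
    using norm_perm[OF tau, of "s - y"] by (simp add: Ps a_def matrix_vector_mult_diff_distrib)
  have ps: "pairpen s = inner wvec r"
    using pairpen_perm[OF tau, of s] Ps pairpen_sorted[OF rD] by metis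
  have ls: "l1norm s = l1norm r"
    using l1_perm[OF tau, of s] Ps by metis
  have pz: "pairpen z = inner wvec t"
    using pairpen_perm[OF sz, of z] pairpen_sorted[OF tD] by (simp add: t_def)
  have lz: "l1norm z = l1norm t"
    using l1_perm[OF sz, of z] by (simp add: t_def)
  have nz: "(norm (t - a))\<^sup>2 \<le> (norm (z - y))\<^sup>2"
    using sort_bound[OF srt tau ya, of z] by (simp add: t_def a_def)
  have sh: "(1/2) * (norm (q - a))\<^sup>2 + \<rho> * inner wvec q
     = (1/2) * (norm (q - v))\<^sup>2 + \<rho> * inner wvec a - (1/2) * \<rho>\<^sup>2 * (norm (wvec::real^'n::{finite,wellorder}))\<^sup>2" for q
    unfolding v_def power2_norm_eq_inner
    by (simp add: inner_add_left inner_add_right inner_diff_left inner_diff_right inner_commute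
      algebra_simps power2_eq_square)
  have k: "(1/2) * (norm (r - v))\<^sup>2 + \<beta> * l1norm r \<le> (1/2) * (norm (t - v))\<^sup>2 + \<beta> * l1norm t"
    unfolding r_def by (rule key_soft[OF b tD])
  have "(1/2) * (norm (s - y))\<^sup>2 + penp \<beta> \<rho> s = (1/2) * (norm (r - a))\<^sup>2 + \<rho> * inner wvec r + \<beta> * l1norm r"
    unfolding penp_def ns ps ls by simp
  also have "\<dots> \<le> (1/2) * (norm (t - a))\<^sup>2 + \<rho> * inner wvec t + \<beta> * l1norm t"
    using sh[of r] sh[of t] k by (simp add: field_simps)
  also have "\<dots> \<le> (1/2) * (norm (z - y))\<^sup>2 + penp \<beta> \<rho> z"
    unfolding penp_def using nz pz lz by simp
  finally show "(1/2) * (norm (s - y))\<^sup>2 + penp \<beta> \<rho> s \<le> (1/2) * (norm (z - y))\<^sup>2 + penp \<beta> \<rho> z" .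
qed

lemma soft_permT: "\<tau> permutes UNIV \<Longrightarrow> transpose (permmat \<tau>) *v soft \<beta> x = soft \<beta> (transpose (permmat \<tau>) *v x)"
  by (simp add: permmatT_mv soft_def)


section \<open>Rank of B_K\<close>

lemma Brow_self: "i \<in> brows \<Longrightarrow> Brow i $ i = 1"
  by (simp add: Brow_nth)

lemma Brow_inj: "inj_on Brow (brows :: 'n::{finite,wellorder} set)"
proof (rule inj_onI)
  fix i j :: 'n assume ij: "i \<in> brows" "j \<in> brows" "Brow i = Brow j"
  then have "Brow j $ i = 1" using Brow_self[of i] by simp
  then show "i = j" by (auto simp: Brow_nth split: if_splits)
qed

lemma Brow_indep:
  assumes K: "K \<subseteq> (brows :: 'n::{finite,wellorder} set)"
  shows "independent (Brow ` K)"
proof -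
  have injK: "inj_on Brow K" using Brow_inj inj_on_subset K by blast
  have "\<not> dependent (Brow ` K)"
  proof
    assume "dependent (Brow ` K)"
    then obtain u where u: "\<exists>v\<in>Brow ` K. u v \<noteq> 0" "(\<Sum>v\<in>Brow ` K. u v *\<^sub>R v) = 0"
      using real_vector.dependent_finite[of "Brow ` K"] by auto
    have "(\<Sum>i\<in>K. u (Brow i) *\<^sub>R Brow i) = 0"
      using u(2) sum.reindex[OF injK, of "\<lambda>v. u v *\<^sub>R v"] by simp
    then have "transpose (BK K) *v (\<chi> i. u (Brow i)) = 0" by (simp add: BKT_mv)
    moreover have "(\<lambda>i. if i \<in> K then (\<chi> i. u (Brow i)) $ i else 0) = (\<lambda>i. if i \<in> K then u (Brow i) else 0)"
      by (rule ext) simp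
    ultimately have "bt (\<lambda>i. if i \<in> K then u (Brow i) else 0) = bt (\<lambda>i. 0)"
      using BKT_bt[OF K, of "\<chi> i. u (Brow i)"] by (simp add: bt_def)
    then have "u (Brow i) = 0" if "i \<in> K" for i
      using bt_eqD[of "\<lambda>i. if i \<in> K then u (Brow i) else 0" "\<lambda>i. 0" i] that K by auto
    then show False using u(1) by auto
  qed
  then show ?thesis by simp
qed

lemma rank_BK:
  assumes K: "K \<subseteq> (brows :: 'n::{finite,wellorder} set)"
  shows "rank (BK K) = card K"
proof -
  have r1: "rows (BK K) \<subseteq> insert 0 (Brow ` K)"
    by (auto simp: rows_def row_def BK_def)
  have r2: "Brow ` K \<subseteq> rows (BK K)"
  proof
    fix x assume "x \<in> Brow ` K"
    then obtain i where i: "i \<in> K" "x = Brow i" by auto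
    have "row i (BK K) = Brow i" using i by (simp add: row_def BK_def vec_eq_iff)
    then show "x \<in> rows (BK K)" unfolding rows_def using i by (metis (mono_tags, lifting) UNIV_I mem_Collect_eq)
  qed
  have "span (rows (BK K)) = span (Brow ` K)"
  proof
    show "span (rows (BK K)) \<subseteq> span (Brow ` K)"
      using real_vector.span_mono[OF r1] real_vector.span_insert_0 by simp
    show "span (Brow ` K) \<subseteq> span (rows (BK K))"
      using real_vector.span_mono[OF r2] .
  qed
  then have "dim (rows (BK K)) = dim (Brow ` K)"
    by (metis real_vector.dim_span)
  also have "\<dots> = card (Brow ` K)" by (rule real_vector.dim_eq_card_independent[OF Brow_indep[OF K]])
  also have "\<dots> = card K" using card_image Brow_inj inj_on_subset K by blast
  finally show ?thesis by (simp add: row_rank_def)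
qed

lemma ID_brows: "ID v \<subseteq> brows"
  unfolding ID_def by auto

lemma KD_iff: "K \<in> KD v \<longleftrightarrow> {i. lamv v $ i \<noteq> 0} \<subseteq> K \<and> K \<subseteq> ID v"
  unfolding KD_def MD_eq using rank_BK ID_brows by blast

lemma supp_KD: "{i. lamv v $ i \<noteq> 0} \<in> KD v"
  unfolding KD_iff ID_def using lamv_supp_brows lamv_compl_each by blast

lemma KD_brows: "K \<in> KD v \<Longrightarrow> K \<subseteq> brows"
  using KD_iff ID_brows by blast

section \<open>Projection formula\<close>

lemma projK_proj:
  assumes "K \<in> KD v"
  shows "projK K *v v = projD v"
proof -
  have K: "K \<subseteq> brows" using KD_brows[OF assms] .
  have supp: "{i. lamv v $ i \<noteq> 0} \<subseteq> K" and KI: "K \<subseteq> ID v" using assms KD_iff by auto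
  have "(\<lambda>i. if i \<in> K then lamv v $ i else 0) = (\<lambda>i. lamv v $ i)" by (rule ext) (use supp in auto)
  then have "transpose (BK K) *v lamv v = v - projD v" using BKT_bt[OF K, of "lamv v"] bt_lamv by simp
  moreover have "BK K *v projD v = 0"
    using KI by (auto simp: BK_mv ID_def vec_eq_iff)
  ultimately have "projK K *v v = projK K *v projD v + projK K *v (transpose (BK K) *v lamv v)"
    by (simp add: matrix_vector_right_distrib[symmetric])
  then show ?thesis using projK_Q2[OF \<open>BK K *v projD v = 0\<close>] projK_Q3[OF K] by simp
qed

section \<open>Ties force multipliers\<close>

lemma VI_lt: "(\<Sum>j\<in>{..<k}. (v - projD v) $ j) \<le> 0"
proof -
  have "inner (v - projD v) (\<chi> j. if j < k then (1::real) else 0) \<le> 0"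
    by (rule VI_add) (auto simp: Dset_iff)
  moreover have "inner (v - projD v) (\<chi> j. if j < k then (1::real) else 0) = (\<Sum>j\<in>{..<k}. (v - projD v) $ j)"
    unfolding inner_vec_def by (simp add: if_distrib sum.If_cases Collect_conj_eq[symmetric] lessThan_def)
  ultimately show ?thesis by simp
qed

lemma atMost_nxt:
  assumes k: "k \<in> brows"
  shows "{..nxt k} = insert (nxt k) {..k}"
proof -
  have "x \<le> nxt k \<longleftrightarrow> x = nxt k \<or> x \<le> k" for x
  proof
    assume x: "x \<le> nxt k"
    show "x = nxt k \<or> x \<le> k"
    proof (rule ccontr)
      assume "\<not> (x = nxt k \<or> x \<le> k)"
      then have "x < nxt k" "k < x" using x by auto
      then show False using nxt_le[of k x] by simp
    qed
  next
    assume "x = nxt k \<or> x \<le> k"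
    then show "x \<le> nxt k" using nxt_gt[OF k] by auto
  qed
  then show ?thesis by auto
qed

lemma tie_lam:
  assumes k: "k \<in> brows" and lt: "v $ k < v $ nxt k"
  shows "lamv v $ k \<noteq> 0"
proof
  assume l0: "lamv v $ k = 0"
  let ?r = "v - projD v"
  have lp: "lamv v $ j = psum ?r j" for j by (simp add: lamv_def)
  have "psum ?r (nxt k) = ?r $ nxt k + psum ?r k"
    unfolding psum_def atMost_nxt[OF k] using nxt_gt[OF k] by (simp add: sum.insert)
  then have "lamv v $ nxt k = lamv v $ k + ?r $ nxt k" using lp by simp
  then have a: "v $ nxt k \<le> projD v $ nxt k" using lamv_nonpos[of v "nxt k"] l0 by simp
  have e: "{..k} = insert k {..<k}" by auto
  have "lamv v $ k = ?r $ k + (\<Sum>j\<in>{..<k}. ?r $ j)"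
    unfolding lp psum_def e by simp
  then have b: "projD v $ k \<le> v $ k" using VI_lt[of v k] l0 by simp
  have "projD v $ nxt k \<le> projD v $ k" using projD_in[of v] nxt_gt[OF k] by (simp add: Dset_iff)
  then show False using a b lt by simp
qed

lemma card_lt_nxt:
  assumes k: "k \<in> brows"
  shows "card {j. j < nxt k} = card {j. j < k} + 1"
proof -
  have "{j. j < nxt k} = insert k {j. j < k}"
  proof -
    have "j < nxt k \<longleftrightarrow> j = k \<or> j < k" for j
    proof
      assume j: "j < nxt k"
      show "j = k \<or> j < k"
      proof (rule ccontr)
        assume "\<not> (j = k \<or> j < k)"
        then have "k < j" by auto
        then show False using nxt_le[of k j] j by simp
      qed
    next
      assume "j = k \<or> j < k"
      then show "j < nxt k" using nxt_gt[OF k] by auto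
    qed
    then show ?thesis by auto
  qed
  then show ?thesis by simp
qed

lemma wvec_step: "k \<in> brows \<Longrightarrow> wvec $ k - wvec $ nxt k = 2"
  by (simp add: wvec_def card_lt_nxt)

lemma pred_exists:
  assumes "(i::'n::{finite,wellorder}) < j"
  shows "\<exists>p. i \<le> p \<and> p \<in> brows \<and> nxt p = j"
proof -
  define p where "p = Max {q. q < j}"
  have ne: "{q. q < j} \<noteq> {}" using assms by auto
  have pj: "p < j" using Max_in[OF _ ne] by (simp add: p_def)
  have ip: "i \<le> p" using assms by (simp add: p_def Max_ge)
  have pb: "p \<in> brows" using pj Max_ge_UNIV[of j] by (auto simp: brows_iff)
  have "nxt p \<le> j" using nxt_le[OF pj] .
  moreover have "\<not> nxt p < j"
  proof
    assume "nxt p < j"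
    then have "nxt p \<le> p" by (simp add: p_def Max_ge)
    then show False using nxt_gt[OF pb] by simp
  qed
  ultimately have "nxt p = j" by simp
  then show ?thesis using ip pb by blast
qed

lemma chain_eq:
  fixes g :: "'n::{finite,wellorder} \<Rightarrow> real"
  assumes step: "\<forall>k\<in>K. g k = g (nxt k)"
    and ties: "\<forall>k\<in>brows. a $ k = a $ nxt k \<longrightarrow> k \<in> K"
    and aD: "a \<in> Dset"
  shows "i \<le> j \<Longrightarrow> a $ i = a $ j \<Longrightarrow> g i = g j"
proof (induction j rule: less_induct)
  case (less j)
  show ?case
  proof (cases "i = j")
    case False
    then have "i < j" using less.prems by simp
    then obtain p where p: "i \<le> p" "p \<in> brows" "nxt p = j" using pred_exists by blast
    have pj: "p < j" using nxt_gt[OF p(2)] p(3) by simp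
    have h1: "a $ j \<le> a $ p" using aD pj unfolding Dset_iff by simp
    have h2: "a $ p \<le> a $ i" using aD p(1) unfolding Dset_iff by simp
    have api: "a $ p = a $ i" using h1 h2 less.prems(2) by simp
    have apn: "a $ p = a $ nxt p" using api less.prems(2) p(3) by simp
    have gip: "g i = g p" using less.IH[OF pj p(1)] api by simp
    have pK: "p \<in> K" using ties p(2) apn by blast
    have "g p = g j" using bspec[OF step pK] p(3) by simp
    then show ?thesis using gip by simp
  qed simp
qed

lemma chain_eq_sym:
  fixes g :: "'n::{finite,wellorder} \<Rightarrow> real"
  assumes "\<forall>k\<in>K. g k = g (nxt k)" "\<forall>k\<in>brows. a $ k = a $ nxt k \<longrightarrow> k \<in> K" "a \<in> Dset"
    "a $ i = a $ j"
  shows "g i = g j"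
proof (cases "i \<le> j")
  case True then show ?thesis using chain_eq[OF assms(1-3), of i j] assms(4) by simp
next
  case False then have "j \<le> i" by simp
  then show ?thesis using chain_eq[OF assms(1-3), of j i] assms(4) by simp
qed


definition QP :: "('n::{finite,wellorder} \<Rightarrow> 'n::{finite,wellorder}) \<Rightarrow> 'n::{finite,wellorder} set \<Rightarrow> real^'n::{finite,wellorder}^'n::{finite,wellorder}" where
  "QP \<tau> K = transpose (permmat \<tau>) ** projK K ** permmat \<tau>"

lemma QP_mv: "QP \<tau> K *v z = transpose (permmat \<tau>) *v (projK K *v (permmat \<tau> *v z))"
  by (simp add: QP_def matrix_vector_mul_assoc[symmetric])

lemma QP_sym: "K \<subseteq> brows \<Longrightarrow> transpose (QP \<tau> K) = QP \<tau> K"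
  by (simp add: QP_def matrix_transpose_mul projK_sym matrix_mul_assoc)

lemma QP_idem:
  assumes K: "K \<subseteq> brows" and tau: "\<tau> permutes UNIV"
  shows "QP \<tau> K ** QP \<tau> K = QP \<tau> K"
proof -
  have "QP \<tau> K *v (QP \<tau> K *v z) = QP \<tau> K *v z" for z
  proof -
    have "projK K *v (projK K *v w) = projK K *v w" for w
      using projK_idem[OF K] by (metis matrix_vector_mul_assoc)
    then show ?thesis by (simp add: QP_mv permmat_PT[OF tau])
  qed
  then show ?thesis by (simp add: matrix_eq matrix_vector_mul_assoc[symmetric])
qed

lemma BK_zero_iff: "K \<subseteq> brows \<Longrightarrow> BK K *v x = 0 \<longleftrightarrow> (\<forall>k\<in>K. x $ k = x $ nxt k)"
  by (auto simp: BK_mv vec_eq_iff inner_Brow subset_iff)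

lemma QP_fix:
  assumes K: "K \<subseteq> brows" and tau: "\<tau> permutes UNIV"
  shows "QP \<tau> K *v z = z \<longleftrightarrow> (\<forall>k\<in>K. z $ \<tau> k = z $ \<tau> (nxt k))"
proof -
  have "QP \<tau> K *v z = z \<longleftrightarrow> projK K *v (permmat \<tau> *v z) = permmat \<tau> *v z"
  proof
    assume "QP \<tau> K *v z = z"
    then have "permmat \<tau> *v (QP \<tau> K *v z) = permmat \<tau> *v z" by simp
    then show "projK K *v (permmat \<tau> *v z) = permmat \<tau> *v z" by (simp add: QP_mv permmat_PT[OF tau])
  next
    assume "projK K *v (permmat \<tau> *v z) = permmat \<tau> *v z"
    then show "QP \<tau> K *v z = z" by (simp add: QP_mv permmat_TP[OF tau])
  qed
  also have "\<dots> \<longleftrightarrow> BK K *v (permmat \<tau> *v z) = 0" by (rule projK_fix[OF K])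
  also have "\<dots> \<longleftrightarrow> (\<forall>k\<in>K. z $ \<tau> k = z $ \<tau> (nxt k))"
    by (simp add: BK_zero_iff[OF K] permmat_mv)
  finally show ?thesis .
qed

lemma symidem_eq:
  fixes A B :: "real^'n^'n"
  assumes "transpose A = A" "A ** A = A" "transpose B = B" "B ** B = B"
    and fx: "\<And>x. A *v x = x \<longleftrightarrow> B *v x = x"
  shows "A = B"
proof -
  have BA: "B ** A = A"
  proof -
    have "B *v (A *v x) = A *v x" for x
      using fx[of "A *v x"] assms(2) by (metis matrix_vector_mul_assoc)
    then show ?thesis by (simp add: matrix_eq matrix_vector_mul_assoc[symmetric])
  qed
  have AB: "A ** B = B"
  proof -
    have "A *v (B *v x) = B *v x" for x
      using fx[of "B *v x"] assms(4) by (metis matrix_vector_mul_assoc)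
    then show ?thesis by (simp add: matrix_eq matrix_vector_mul_assoc[symmetric])
  qed
  have "A = transpose (B ** A)" using BA assms(1) by simp
  also have "\<dots> = A ** B" using assms(1,3) by (simp add: matrix_transpose_mul)
  finally show ?thesis using AB by simp
qed

lemma sym_from_inv:
  fixes Q T :: "real^'n^'n"
  assumes Qs: "transpose Q = Q" and Qi: "Q ** Q = Q" and Ts: "transpose T = T"
    and inv: "\<And>z. Q *v z = z \<Longrightarrow> Q *v (T *v z) = T *v z"
  shows "transpose (T ** Q) = T ** Q"
proof -
  have "Q ** T ** Q = T ** Q"
  proof -
    have "Q *v (T *v (Q *v x)) = T *v (Q *v x)" for x
      using inv[of "Q *v x"] Qi by (metis matrix_vector_mul_assoc)
    then show ?thesis by (simp add: matrix_eq matrix_vector_mul_assoc[symmetric])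
  qed
  moreover have "transpose (Q ** T ** Q) = Q ** T ** Q"
    using Qs Ts by (simp add: matrix_transpose_mul matrix_mul_assoc)
  moreover have "transpose (T ** Q) = Q ** T" using Qs Ts by (simp add: matrix_transpose_mul)
  ultimately show ?thesis by metis
qed

lemma prod_idem:
  fixes Q T :: "real^'n^'n"
  assumes Qs: "transpose Q = Q" and Qi: "Q ** Q = Q" and Ts: "transpose T = T" and Ti: "T ** T = T"
    and sym: "transpose (T ** Q) = T ** Q"
  shows "(T ** Q) ** (T ** Q) = T ** Q"
proof -
  have QT: "Q ** T = T ** Q" using sym Qs Ts by (simp add: matrix_transpose_mul)
  have "(T ** Q) ** (T ** Q) = T ** (Q ** T) ** Q" by (simp add: matrix_mul_assoc)
  also have "\<dots> = (T ** T) ** (Q ** Q)" by (simp add: QT matrix_mul_assoc)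
  finally show ?thesis using Qi Ti by simp
qed

definition diagm :: "('n::{finite,wellorder} \<Rightarrow> real) \<Rightarrow> real^'n::{finite,wellorder}^'n::{finite,wellorder}" where
  "diagm q = (\<chi> i j. if i = j then q i else 0)"

lemma diagm_mv: "diagm q *v x = (\<chi> i. q i * x $ i)"
proof -
  have "(diagm q *v x) $ i = q i * x $ i" for i
  proof -
    have "(diagm q *v x) $ i = (\<Sum>j\<in>UNIV. (if i = j then q i else 0) * x $ j)"
      by (simp add: matrix_vector_mult_def diagm_def)
    also have "\<dots> = (\<Sum>j\<in>UNIV. if i = j then q i * x $ j else 0)" by (intro sum.cong) auto
    also have "\<dots> = q i * x $ i" by simp
    finally show ?thesis .
  qed
  then show ?thesis by (simp add: vec_eq_iff)
qed

lemma diagm_sym: "transpose (diagm q) = diagm q"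
  by (auto simp: diagm_def transpose_def vec_eq_iff)

lemma diagm_idem: "(\<And>i. q i \<in> {0, 1}) \<Longrightarrow> diagm q ** diagm q = diagm q"
proof -
  assume h: "\<And>i. q i \<in> {0, 1}"
  have e: "q i * (q i * x) = q i * x" for i x using h[of i] by auto
  have "diagm q *v (diagm q *v x) = diagm q *v x" for x by (simp add: diagm_mv e)
  then show ?thesis by (simp add: matrix_eq matrix_vector_mul_assoc[symmetric])
qed


definition dBq :: "real \<Rightarrow> real^'n::{finite,wellorder} \<Rightarrow> ('n \<Rightarrow> real) \<Rightarrow> bool" where
  "dBq \<beta> \<eta> q \<longleftrightarrow> (\<forall>i. (\<bar>\<eta>$i\<bar> < \<beta> \<longrightarrow> q i = 0) \<and> (\<bar>\<eta>$i\<bar> = \<beta> \<longrightarrow> q i \<in> {0,1}) \<and> (\<bar>\<eta>$i\<bar> > \<beta> \<longrightarrow> q i = 1))"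

lemma dBq_01: "dBq \<beta> \<eta> q \<Longrightarrow> q i \<in> {0, 1}"
  unfolding dBq_def by (metis insertI1 insertI2 linorder_neqE_linordered_idom)

lemma QS_iff: "Q \<in> QS \<rho> \<sigma> u \<longleftrightarrow> (\<exists>K. Q = QP (\<sigma> u) K \<and> K \<in> KD (permmat (\<sigma> u) *v u - \<rho> *\<^sub>R wvec))"
  unfolding QS_def QD_def QP_def by blast

lemma dB_iff: "\<Theta> \<in> dBprox_l1 \<beta> \<eta> \<longleftrightarrow> (\<exists>q. \<Theta> = diagm q \<and> dBq \<beta> \<eta> q)"
  unfolding dBprox_l1_def diagm_def dBq_def by blast

lemma Mset_iff:
  "M \<in> Mset \<beta> \<rho> \<sigma> u \<longleftrightarrow> (\<exists>q K. M = diagm q ** QP (\<sigma> u) K \<and> dBq \<beta> (Sfun \<rho> u) q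
      \<and> K \<in> KD (permmat (\<sigma> u) *v u - \<rho> *\<^sub>R wvec)
      \<and> transpose (diagm q ** QP (\<sigma> u) K) = diagm q ** QP (\<sigma> u) K)"
proof -
  have "M \<in> Mset \<beta> \<rho> \<sigma> u \<longleftrightarrow> (\<exists>\<Theta> Q. M = \<Theta> ** Q \<and> \<Theta> \<in> dBprox_l1 \<beta> (Sfun \<rho> u) \<and> Q \<in> QS \<rho> \<sigma> u
       \<and> transpose (\<Theta> ** Q) = \<Theta> ** Q)"
    unfolding Mset_def by blast
  then show ?thesis unfolding QS_iff dB_iff by blast
qed

lemma ex_pos_lb:
  assumes "finite A" "\<forall>x\<in>A. (0::real) < x"
  shows "\<exists>e>0. \<forall>x\<in>A. e \<le> x"
proof -
  have "Min (insert 1 A) > 0" using assms by (subst Min_gr_iff) auto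
  moreover have "\<forall>x\<in>A. Min (insert 1 A) \<le> x" using assms by auto
  ultimately show ?thesis by blast
qed

lemma ex_pos_lb_fun:
  fixes f :: "'a::finite \<Rightarrow> real"
  assumes "\<forall>i. P i \<longrightarrow> 0 < f i"
  shows "\<exists>e>0. \<forall>i. P i \<longrightarrow> e \<le> f i"
proof -
  obtain e where "e > 0" "\<forall>x\<in>f ` {i. P i}. e \<le> x"
    using ex_pos_lb[of "f ` {i. P i}"] assms by auto
  then show ?thesis by auto
qed

lemma soft_loc:
  assumes b: "\<beta> > 0" and c1: "\<bar>s' - s\<bar> < \<beta>" and c2: "\<bar>s\<bar> \<noteq> \<beta> \<longrightarrow> \<bar>s' - s\<bar> < \<bar>\<bar>s\<bar> - \<beta>\<bar>"
    and q: "(\<bar>s'\<bar> < \<beta> \<longrightarrow> q = 0) \<and> (\<bar>s'\<bar> = \<beta> \<longrightarrow> q \<in> {0,1}) \<and> (\<bar>s'\<bar> > \<beta> \<longrightarrow> q = 1)"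
  shows "softf \<beta> s' - softf \<beta> s = q * (s' - s)"
    and "(\<bar>s\<bar> < \<beta> \<longrightarrow> q = 0) \<and> (\<bar>s\<bar> = \<beta> \<longrightarrow> q \<in> {0,1}) \<and> (\<bar>s\<bar> > \<beta> \<longrightarrow> q = 1)"
proof -
  have q01: "q \<in> {0, 1}" using q by (metis insertI1 insertI2 linorder_neqE_linordered_idom)
  show "softf \<beta> s' - softf \<beta> s = q * (s' - s)"
    using b c1 c2 q q01 unfolding softf_def by (auto simp: abs_if split: if_splits)
  show "(\<bar>s\<bar> < \<beta> \<longrightarrow> q = 0) \<and> (\<bar>s\<bar> = \<beta> \<longrightarrow> q \<in> {0,1}) \<and> (\<bar>s\<bar> > \<beta> \<longrightarrow> q = 1)"
    using b c1 c2 q q01 by (auto simp: abs_if split: if_splits)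
qed

lemma perm_fix_transfer:
  fixes y z :: "real^'n::{finite,wellorder}"
  assumes t1: "\<tau>1 permutes UNIV" and t2: "\<tau>2 permutes UNIV"
    and a1: "\<And>i. y $ \<tau>1 i = a $ i" and a2: "\<And>i. y $ \<tau>2 i = a $ i"
    and aD: "a \<in> Dset" and ties: "\<forall>k\<in>brows. a $ k = a $ nxt k \<longrightarrow> k \<in> K"
    and h: "\<forall>k\<in>K. z $ \<tau>1 k = z $ \<tau>1 (nxt k)"
  shows "\<forall>k\<in>K. z $ \<tau>2 k = z $ \<tau>2 (nxt k)"
proof
  fix k assume kK: "k \<in> K"
  define g where "g i = z $ \<tau>1 i" for i
  have st: "\<forall>k\<in>K. g k = g (nxt k)" using h by (simp add: g_def)
  have tr: "z $ \<tau>2 j = g j" for j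
  proof -
    define i where "i = inv \<tau>1 (\<tau>2 j)"
    have ti: "\<tau>1 i = \<tau>2 j" unfolding i_def by (simp add: permutes_inverses[OF t1])
    have "a $ i = a $ j" using a1[of i] a2[of j] ti by simp
    then have "g i = g j" by (rule chain_eq_sym[OF st ties aD])
    then show ?thesis using ti by (simp add: g_def)
  qed
  show "z $ \<tau>2 k = z $ \<tau>2 (nxt k)" using tr[of k] tr[of "nxt k"] bspec[OF st kK] by simp
qed

lemma sorterI:
  assumes "\<And>z. \<sigma> z permutes UNIV" "\<And>z i j. i \<le> j \<Longrightarrow> z $ (\<sigma> z j) \<le> z $ (\<sigma> z i)"
  shows "sorter \<sigma>"
  unfolding sorter_def using assms sorts_Dset by blast

lemma norm_permT: "\<tau> permutes UNIV \<Longrightarrow> norm (transpose (permmat \<tau>) *v x) = norm (x::real^'n::{finite,wellorder})"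
  using norm_perm[of \<tau> "transpose (permmat \<tau>) *v x"] permmat_PT[of \<tau> x] by simp

lemma main_nonempty:
  fixes y :: "real^'n::{finite,wellorder}" and \<sigma> :: "real^'n::{finite,wellorder} \<Rightarrow> 'n::{finite,wellorder} \<Rightarrow> 'n::{finite,wellorder}"
  assumes b: "\<beta> > 0" and r: "\<rho> > 0" and srt: "sorter \<sigma>"
  shows "Mset \<beta> \<rho> \<sigma> y \<noteq> {}"
proof -
  define \<tau> where "\<tau> = \<sigma> y"
  have tau: "\<tau> permutes UNIV" and ya: "permmat \<tau> *v y \<in> Dset"
    using srt by (auto simp: sorter_def \<tau>_def)
  define v where "v = permmat \<tau> *v y - \<rho> *\<^sub>R wvec"
  define K0 where "K0 = {i. lamv v $ i \<noteq> 0}"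
  have K0: "K0 \<in> KD v" unfolding K0_def by (rule supp_KD)
  have K0b: "K0 \<subseteq> brows" by (rule KD_brows[OF K0])
  define S where "S = Sfun \<rho> y"
  have S_eq: "S = transpose (permmat \<tau>) *v projD v"
    using Sfun_formula[OF srt tau ya] r by (simp add: S_def v_def)
  have Sc: "S $ \<tau> j = projD v $ j" for j
    by (simp add: S_eq permmatT_mv[OF tau] permutes_inverses[OF tau])
  define q0 where "q0 i = (if \<bar>S $ i\<bar> > \<beta> then 1 else (0::real))" for i
  have dq: "dBq \<beta> S q0" unfolding dBq_def q0_def by auto
  have inv: "QP \<tau> K0 *v (diagm q0 *v z) = diagm q0 *v z" if "QP \<tau> K0 *v z = z" for z
  proof -
    have h: "\<forall>k\<in>K0. z $ \<tau> k = z $ \<tau> (nxt k)" using that QP_fix[OF K0b tau] by simp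
    have "q0 (\<tau> k) = q0 (\<tau> (nxt k))" if k: "k \<in> K0" for k
    proof -
      have "Brow k \<bullet> projD v = 0"
        using k lamv_compl_each[of k v] K0b unfolding K0_def by auto
      then have "projD v $ k = projD v $ nxt k" using k K0b inner_Brow[of k] by auto
      then show ?thesis by (simp add: q0_def Sc)
    qed
    then have "\<forall>k\<in>K0. (diagm q0 *v z) $ \<tau> k = (diagm q0 *v z) $ \<tau> (nxt k)"
      using h by (simp add: diagm_mv)
    then show ?thesis using QP_fix[OF K0b tau] by simp
  qed
  have sym: "transpose (diagm q0 ** QP \<tau> K0) = diagm q0 ** QP \<tau> K0"
    by (rule sym_from_inv[OF QP_sym[OF K0b] QP_idem[OF K0b tau] diagm_sym inv])
  have "diagm q0 ** QP \<tau> K0 \<in> Mset \<beta> \<rho> \<sigma> y"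
    unfolding Mset_iff using dq K0 sym by (auto simp: \<tau>_def S_def v_def)
  then show ?thesis by auto
qed

lemma main_finite: "finite (Mset \<beta> \<rho> \<sigma> (y::real^'n::{finite,wellorder}))"
proof -
  have "Mset \<beta> \<rho> \<sigma> y \<subseteq> (\<lambda>(A, \<tau>, K). diagm (\<lambda>i. if i \<in> A then 1 else 0) ** QP \<tau> K) ` UNIV"
  proof
    fix M assume "M \<in> Mset \<beta> \<rho> \<sigma> y"
    then obtain q K where M: "M = diagm q ** QP (\<sigma> y) K" and dq: "dBq \<beta> (Sfun \<rho> y) q"
      unfolding Mset_iff by blast
    have "q = (\<lambda>i. if i \<in> {i. q i = 1} then 1 else 0)"
      using dBq_01[OF dq] by (auto simp: fun_eq_iff)
    then have "M = (\<lambda>(A, \<tau>, K). diagm (\<lambda>i. if i \<in> A then 1 else 0) ** QP \<tau> K) ({i. q i = 1}, \<sigma> y, K)"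
      using M by simp
    then show "M \<in> (\<lambda>(A, \<tau>, K). diagm (\<lambda>i. if i \<in> A then 1 else 0) ** QP \<tau> K) ` UNIV" by blast
  qed
  then show ?thesis by (rule finite_subset) simp
qed

lemma main_psd:
  assumes "M \<in> Mset \<beta> \<rho> \<sigma> y" and srt: "sorter \<sigma>"
  shows "transpose M = M \<and> psd M \<and> transpose (mat 1 - M) = mat 1 - M \<and> psd (mat 1 - M)"
proof -
  obtain q K where M: "M = diagm q ** QP (\<sigma> y) K" and dq: "dBq \<beta> (Sfun \<rho> y) q"
    and K: "K \<in> KD (permmat (\<sigma> y) *v y - \<rho> *\<^sub>R wvec)"
    and sym: "transpose (diagm q ** QP (\<sigma> y) K) = diagm q ** QP (\<sigma> y) K"
    using assms(1) unfolding Mset_iff by blast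
  have Kb: "K \<subseteq> brows" by (rule KD_brows[OF K])
  have tau: "\<sigma> y permutes UNIV" using srt by (simp add: sorter_def)
  have idem: "M ** M = M"
    unfolding M by (rule prod_idem[OF QP_sym[OF Kb] QP_idem[OF Kb tau] diagm_sym diagm_idem[OF dBq_01[OF dq]] sym])
  have s: "transpose M = M" using sym M by simp
  show ?thesis using symidem_psd[OF s idem] symidem_compl[OF s idem] symidem_psd[OF symidem_compl[OF s idem]] s
    by simp
qed


lemma main_local:
  fixes y :: "real^'n::{finite,wellorder}" and \<sigma> :: "real^'n::{finite,wellorder} \<Rightarrow> 'n::{finite,wellorder} \<Rightarrow> 'n::{finite,wellorder}"
  assumes b: "\<beta> > 0" and r: "\<rho> > 0" and srt: "sorter \<sigma>"
  shows "\<exists>\<delta>>0. \<forall>u. norm (u - y) < \<delta> \<longrightarrow> Mset \<beta> \<rho> \<sigma> u \<subseteq> Mset \<beta> \<rho> \<sigma> y \<and>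
     (\<forall>M\<in>Mset \<beta> \<rho> \<sigma> u. prox (penp \<beta> \<rho>) u - prox (penp \<beta> \<rho>) y - M *v (u - y) = 0)"
proof -
  define \<tau> where "\<tau> = \<sigma> y"
  have tau: "\<tau> permutes UNIV" and ya: "permmat \<tau> *v y \<in> Dset"
    using srt by (auto simp: sorter_def \<tau>_def)
  define a where "a = permmat \<tau> *v y"
  define v where "v = a - \<rho> *\<^sub>R wvec"
  define P where "P = projD v"
  define L where "L = lamv v"
  define S where "S = Sfun \<rho> y"
  have S_eq: "S = transpose (permmat \<tau>) *v P"
    using Sfun_formula[OF srt tau ya] r by (simp add: S_def P_def v_def a_def)
  have aD: "a \<in> Dset" using ya by (simp add: a_def)
  have ay: "y $ \<tau> i = a $ i" for i by (simp add: a_def permmat_mv)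
  have tiesL: "L $ k \<noteq> 0" if "k \<in> brows" "a $ k = a $ nxt k" for k
  proof -
    have "v $ k - v $ nxt k = - \<rho> * (wvec $ k - wvec $ nxt k)"
      using that(2) by (simp add: v_def algebra_simps)
    then have "v $ k < v $ nxt k" using wvec_step[OF that(1)] r by simp
    then show ?thesis unfolding L_def by (rule tie_lam[OF that(1)])
  qed
  obtain e1 where e1: "e1 > 0" "\<forall>p. y $ fst p < y $ snd p \<longrightarrow> e1 \<le> y $ snd p - y $ fst p"
    using ex_pos_lb_fun[of "\<lambda>p. y $ fst p < y $ snd p" "\<lambda>p. y $ snd p - y $ fst p"] by auto
  obtain e2 where e2: "e2 > 0" "\<forall>k. L $ k \<noteq> 0 \<longrightarrow> e2 \<le> \<bar>L $ k\<bar>"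
    using ex_pos_lb_fun[of "\<lambda>k. L $ k \<noteq> 0" "\<lambda>k. \<bar>L $ k\<bar>"] by auto
  obtain e3 where e3: "e3 > 0" "\<forall>k. k \<in> brows \<and> Brow k \<bullet> P > 0 \<longrightarrow> e3 \<le> Brow k \<bullet> P"
    using ex_pos_lb_fun[of "\<lambda>k. k \<in> brows \<and> Brow k \<bullet> P > 0" "\<lambda>k. Brow k \<bullet> P"] by auto
  obtain e4 where e4: "e4 > 0" "\<forall>i. \<bar>S $ i\<bar> \<noteq> \<beta> \<longrightarrow> e4 \<le> \<bar>\<bar>S $ i\<bar> - \<beta>\<bar>"
    using ex_pos_lb_fun[of "\<lambda>i. \<bar>S $ i\<bar> \<noteq> \<beta>" "\<lambda>i. \<bar>\<bar>S $ i\<bar> - \<beta>\<bar>"] by auto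
  define n where "n = real CARD('n)"
  have n1: "n \<ge> 1" unfolding n_def by simp
  define \<delta> where "\<delta> = min (min (e1/2) (e2/(2*n+1))) (min (e3/3) (min e4 \<beta>))"
  have dpos: "\<delta> > 0" unfolding \<delta>_def using e1 e2 e3 e4 b n1 by auto
  have d1: "\<delta> \<le> e1/2" "\<delta> \<le> e2/(2*n+1)" "\<delta> \<le> e3/3" "\<delta> \<le> e4" "\<delta> \<le> \<beta>"
    unfolding \<delta>_def by (simp_all only: min_le_iff_disj) simp_all
  have "\<forall>u. norm (u - y) < \<delta> \<longrightarrow> Mset \<beta> \<rho> \<sigma> u \<subseteq> Mset \<beta> \<rho> \<sigma> y \<and>
     (\<forall>M\<in>Mset \<beta> \<rho> \<sigma> u. prox (penp \<beta> \<rho>) u - prox (penp \<beta> \<rho>) y - M *v (u - y) = 0)"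
  proof (intro allI impI)
    fix u assume u: "norm (u - y) < \<delta>"
    define \<tau>u where "\<tau>u = \<sigma> u"
    have tu: "\<tau>u permutes UNIV" and uD: "permmat \<tau>u *v u \<in> Dset"
      using srt by (auto simp: sorter_def \<tau>u_def)
    have comp: "\<bar>u $ i - y $ i\<bar> < \<delta>" for i
      using component_le_norm_cart[of "u - y" i] u by simp
    have sy: "permmat \<tau>u *v y \<in> Dset"
      unfolding Dset_iff permmat_mv
    proof (intro allI impI)
      fix i j :: 'n assume ij: "i \<le> j"
      show "(\<chi> i. y $ \<tau>u i) $ j \<le> (\<chi> i. y $ \<tau>u i) $ i"
      proof (rule ccontr)
        assume "\<not> ?thesis"
        then have lt: "y $ \<tau>u i < y $ \<tau>u j" by simp
        then have "e1 \<le> y $ \<tau>u j - y $ \<tau>u i" using e1(2)[rule_format, of "(\<tau>u i, \<tau>u j)"] by simp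
        moreover have "u $ \<tau>u j \<le> u $ \<tau>u i" using uD ij by (simp add: Dset_iff permmat_mv)
        moreover have "\<bar>u $ \<tau>u i - y $ \<tau>u i\<bar> < \<delta>" "\<bar>u $ \<tau>u j - y $ \<tau>u j\<bar> < \<delta>" by (rule comp)+
        ultimately show False using d1(1) by linarith
      qed
    qed
    define \<omega> where "\<omega> = inv \<tau> \<circ> \<tau>u"
    have om: "\<omega> permutes UNIV" unfolding \<omega>_def by (intro permutes_compose tu permutes_inv tau)
    have Pa: "permmat \<tau>u *v y = a"
    proof (rule sorted_unique[OF aD sy om])
      show "permmat \<tau>u *v y = permmat \<omega> *v a"
        by (simp add: vec_eq_iff permmat_mv a_def \<omega>_def permutes_inverses[OF tau])
    qed
    have ayu: "y $ \<tau>u i = a $ i" for i using Pa by (metis permmat_mv vec_lambda_beta)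
    define vu where "vu = permmat \<tau>u *v u - \<rho> *\<^sub>R wvec"
    have v_alt: "v = permmat \<tau>u *v y - \<rho> *\<^sub>R wvec" using Pa by (simp add: v_def)
    have dv: "vu - v = permmat \<tau>u *v (u - y)"
      by (simp add: vu_def v_alt matrix_vector_mult_diff_distrib)
    have ndv: "norm (vu - v) = norm (u - y)" using norm_perm[OF tu] dv by simp
    define Su where "Su = Sfun \<rho> u"
    have Su_eq: "Su = transpose (permmat \<tau>u) *v projD vu"
      using Sfun_formula[OF srt tu uD] r by (simp add: Su_def vu_def \<tau>u_def)
    have S_eq2: "S = transpose (permmat \<tau>u) *v P"
      using Sfun_formula[OF srt tu sy] r by (simp add: S_def P_def v_alt)
    have nP: "norm (projD vu - P) \<le> norm (u - y)"
      using projD_lip[of vu v] ndv by (simp add: dist_norm P_def)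
    have nS: "norm (Su - S) \<le> norm (u - y)"
      using nP norm_permT[OF tu, of "projD vu - P"]
      by (simp add: Su_eq S_eq2 matrix_vector_mult_diff_distrib)
    have cS: "\<bar>Su $ i - S $ i\<bar> < \<delta>" for i
      using component_le_norm_cart[of "Su - S" i] nS u by simp
    have cP: "\<bar>projD vu $ i - P $ i\<bar> < \<delta>" for i
      using component_le_norm_cart[of "projD vu - P" i] nP u by simp
    have lamclose: "\<bar>lamv vu $ k - L $ k\<bar> < e2" for k
    proof -
      have "\<bar>lamv vu $ k - L $ k\<bar> \<le> 2 * n * norm (vu - v)"
        unfolding L_def n_def by (rule lamv_lip)
      also have "\<dots> = 2 * n * norm (u - y)" by (simp add: ndv)
      also have "\<dots> \<le> 2 * n * \<delta>" using u n1 by (intro mult_left_mono) auto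
      also have "\<dots> < (2 * n + 1) * \<delta>" using dpos by simp
      also have "\<dots> \<le> e2" using d1(2) n1 by (simp add: field_simps)
      finally show ?thesis .
    qed
    have stab: "K \<in> KD v" "\<forall>k\<in>brows. a $ k = a $ nxt k \<longrightarrow> k \<in> K" if K: "K \<in> KD vu" for K
    proof -
      have suppu: "{i. lamv vu $ i \<noteq> 0} \<subseteq> K" and KI: "K \<subseteq> ID vu" using K KD_iff by auto
      have supp: "{i. L $ i \<noteq> 0} \<subseteq> K"
      proof
        fix k assume "k \<in> {i. L $ i \<noteq> 0}"
        then have "L $ k \<noteq> 0" by simp
        then have "e2 \<le> \<bar>L $ k\<bar>" using e2 by auto
        then have "lamv vu $ k \<noteq> 0" using lamclose[of k] by auto
        then show "k \<in> K" using suppu by auto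
      qed
      have "K \<subseteq> ID v"
      proof
        fix k assume kK: "k \<in> K"
        then have kb: "k \<in> brows" and z: "Brow k \<bullet> projD vu = 0" using KI by (auto simp: ID_def)
        have nn: "Brow k \<bullet> P \<ge> 0" unfolding P_def by (rule Brow_projD_nonneg[OF kb])
        have "Brow k \<bullet> P = 0"
        proof (rule ccontr)
          assume "Brow k \<bullet> P \<noteq> 0"
          then have "e3 \<le> Brow k \<bullet> P" using e3 nn kb by auto
          moreover have "Brow k \<bullet> P = P $ k - P $ nxt k" "Brow k \<bullet> projD vu = projD vu $ k - projD vu $ nxt k"
            using inner_Brow[OF kb] by auto
          moreover note cP[of k] cP[of "nxt k"] d1(3) z
          ultimately show False by linarith
        qed
        then show "k \<in> ID v" using kb by (simp add: ID_def P_def)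
      qed
      then show "K \<in> KD v" using supp unfolding KD_iff L_def by auto
      show "\<forall>k\<in>brows. a $ k = a $ nxt k \<longrightarrow> k \<in> K" using supp tiesL by auto
    qed
    have prox_u: "prox (penp \<beta> \<rho>) u = soft \<beta> Su"
      using prox_formula[OF srt tu uD, of \<rho> \<beta>] r b by (simp add: Su_eq soft_permT[OF tu] vu_def)
    have prox_y: "prox (penp \<beta> \<rho>) y = soft \<beta> S"
    proof -
      have "permmat \<tau> *v y - \<rho> *\<^sub>R wvec = v" by (simp add: v_def a_def)
      then show ?thesis using prox_formula[OF srt tau ya, of \<rho> \<beta>] r b by (simp add: S_eq soft_permT[OF tau] P_def)
    qed
    show "Mset \<beta> \<rho> \<sigma> u \<subseteq> Mset \<beta> \<rho> \<sigma> y \<and>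
     (\<forall>M\<in>Mset \<beta> \<rho> \<sigma> u. prox (penp \<beta> \<rho>) u - prox (penp \<beta> \<rho>) y - M *v (u - y) = 0)"
    proof (intro conjI ballI subsetI)
      fix M assume M: "M \<in> Mset \<beta> \<rho> \<sigma> u"
      then obtain q K where Mq: "M = diagm q ** QP \<tau>u K" and dq: "dBq \<beta> Su q"
        and K: "K \<in> KD vu" and sym: "transpose (diagm q ** QP \<tau>u K) = diagm q ** QP \<tau>u K"
        unfolding Mset_iff by (auto simp: \<tau>u_def Su_def vu_def)
      note st = stab[OF K]
      have Kb: "K \<subseteq> brows" by (rule KD_brows[OF K])
      have QPeq: "QP \<tau>u K = QP \<tau> K"
      proof (rule symidem_eq[OF QP_sym[OF Kb] QP_idem[OF Kb tu] QP_sym[OF Kb] QP_idem[OF Kb tau]])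
        fix z
        show "QP \<tau>u K *v z = z \<longleftrightarrow> QP \<tau> K *v z = z"
          unfolding QP_fix[OF Kb tu] QP_fix[OF Kb tau]
          using perm_fix_transfer[OF tu tau ayu ay aD st(2), of z]
            perm_fix_transfer[OF tau tu ay ayu aD st(2), of z] by blast
      qed
      have loc: "softf \<beta> (Su $ i) - softf \<beta> (S $ i) = q i * (Su $ i - S $ i)"
        "(\<bar>S $ i\<bar> < \<beta> \<longrightarrow> q i = 0) \<and> (\<bar>S $ i\<bar> = \<beta> \<longrightarrow> q i \<in> {0,1}) \<and> (\<bar>S $ i\<bar> > \<beta> \<longrightarrow> q i = 1)" for i
      proof -
        have c1: "\<bar>Su $ i - S $ i\<bar> < \<beta>" using cS[of i] d1(5) by linarith
        have c2: "\<bar>S $ i\<bar> \<noteq> \<beta> \<longrightarrow> \<bar>Su $ i - S $ i\<bar> < \<bar>\<bar>S $ i\<bar> - \<beta>\<bar>"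
          using cS[of i] d1(4) e4(2) by force
        have c3: "(\<bar>Su $ i\<bar> < \<beta> \<longrightarrow> q i = 0) \<and> (\<bar>Su $ i\<bar> = \<beta> \<longrightarrow> q i \<in> {0,1}) \<and> (\<bar>Su $ i\<bar> > \<beta> \<longrightarrow> q i = 1)"
          using dq unfolding dBq_def by blast
        show "softf \<beta> (Su $ i) - softf \<beta> (S $ i) = q i * (Su $ i - S $ i)"
          by (rule soft_loc(1)[OF b c1 c2 c3])
        show "(\<bar>S $ i\<bar> < \<beta> \<longrightarrow> q i = 0) \<and> (\<bar>S $ i\<bar> = \<beta> \<longrightarrow> q i \<in> {0,1}) \<and> (\<bar>S $ i\<bar> > \<beta> \<longrightarrow> q i = 1)"
          by (rule soft_loc(2)[OF b c1 c2 c3])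
      qed
      have dqy: "dBq \<beta> S q" unfolding dBq_def using loc(2) by blast
      show "M \<in> Mset \<beta> \<rho> \<sigma> y"
        unfolding Mset_iff using dqy st(1) sym Mq QPeq
        by (auto simp: \<tau>_def S_def v_def a_def)
    next
      fix M assume M: "M \<in> Mset \<beta> \<rho> \<sigma> u"
      then obtain q K where Mq: "M = diagm q ** QP \<tau>u K" and dq: "dBq \<beta> Su q"
        and K: "K \<in> KD vu"
        unfolding Mset_iff by (auto simp: \<tau>u_def Su_def vu_def)
      note st = stab[OF K]
      have loc: "softf \<beta> (Su $ i) - softf \<beta> (S $ i) = q i * (Su $ i - S $ i)" for i
      proof -
        have c1: "\<bar>Su $ i - S $ i\<bar> < \<beta>" using cS[of i] d1(5) by linarith
        have c2: "\<bar>S $ i\<bar> \<noteq> \<beta> \<longrightarrow> \<bar>Su $ i - S $ i\<bar> < \<bar>\<bar>S $ i\<bar> - \<beta>\<bar>"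
          using cS[of i] d1(4) e4(2) by force
        have c3: "(\<bar>Su $ i\<bar> < \<beta> \<longrightarrow> q i = 0) \<and> (\<bar>Su $ i\<bar> = \<beta> \<longrightarrow> q i \<in> {0,1}) \<and> (\<bar>Su $ i\<bar> > \<beta> \<longrightarrow> q i = 1)"
          using dq unfolding dBq_def by blast
        show ?thesis by (rule soft_loc(1)[OF b c1 c2 c3])
      qed
      have QPd: "QP \<tau>u K *v (u - y) = Su - S"
      proof -
        have "QP \<tau>u K *v (u - y) = transpose (permmat \<tau>u) *v (projK K *v (vu - v))"
          by (simp add: QP_mv dv)
        also have "\<dots> = transpose (permmat \<tau>u) *v (projD vu - P)"
          using projK_proj[OF K] projK_proj[OF st(1)]
          by (simp add: matrix_vector_mult_diff_distrib P_def)
        also have "\<dots> = Su - S" by (simp add: Su_eq S_eq2 matrix_vector_mult_diff_distrib)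
        finally show ?thesis .
      qed
      have "M *v (u - y) = diagm q *v (Su - S)"
        by (simp add: Mq matrix_vector_mul_assoc[symmetric] QPd)
      also have "\<dots> = soft \<beta> Su - soft \<beta> S"
        using loc by (simp add: diagm_mv soft_def vec_eq_iff)
      finally show "prox (penp \<beta> \<rho>) u - prox (penp \<beta> \<rho>) y - M *v (u - y) = 0"
        by (simp add: prox_u prox_y)
    qed
  qed
  then show ?thesis using dpos by blast
qed


theorem theorem2p9:
  fixes \<beta> \<rho> :: real and y :: "real^'n::{finite,wellorder}"
    and \<sigma> :: "real^'n::{finite,wellorder} \<Rightarrow> 'n::{finite,wellorder} \<Rightarrow> 'n::{finite,wellorder}"
  assumes "\<beta> > 0" and "\<rho> > 0"
    and "\<And>z. \<sigma> z permutes UNIV"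
    and "\<And>z i j. i \<le> j \<Longrightarrow> z $ (\<sigma> z j) \<le> z $ (\<sigma> z i)"
  shows "Mset \<beta> \<rho> \<sigma> y \<noteq> {} \<and> compact (Mset \<beta> \<rho> \<sigma> y)
    \<and> (\<forall>V. open V \<and> Mset \<beta> \<rho> \<sigma> y \<subseteq> V \<longrightarrow>
          (\<exists>U. open U \<and> y \<in> U \<and> (\<forall>u\<in>U. Mset \<beta> \<rho> \<sigma> u \<subseteq> V)))
    \<and> (\<forall>M\<in>Mset \<beta> \<rho> \<sigma> y. transpose M = M \<and> psd M
          \<and> transpose (mat 1 - M) = mat 1 - M \<and> psd (mat 1 - M))
    \<and> (\<exists>Y. open Y \<and> y \<in> Y \<and> (\<forall>u\<in>Y. \<forall>M\<in>Mset \<beta> \<rho> \<sigma> u.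
          prox (penp \<beta> \<rho>) u - prox (penp \<beta> \<rho>) y - M *v (u - y) = 0))"
proof -
  have srt: "sorter \<sigma>" by (rule sorterI) (use assms(3,4) in auto)
  obtain \<delta> where dpos: "\<delta> > 0" and loc: "\<forall>u. norm (u - y) < \<delta> \<longrightarrow> Mset \<beta> \<rho> \<sigma> u \<subseteq> Mset \<beta> \<rho> \<sigma> y \<and>
     (\<forall>M\<in>Mset \<beta> \<rho> \<sigma> u. prox (penp \<beta> \<rho>) u - prox (penp \<beta> \<rho>) y - M *v (u - y) = 0)"
    using main_local[OF assms(1,2) srt, of y] by blast
  have inball: "norm (u - y) < \<delta>" if "u \<in> ball y \<delta>" for u
    using that by (simp add: dist_norm norm_minus_commute)
  have A: "Mset \<beta> \<rho> \<sigma> y \<noteq> {}" by (rule main_nonempty[OF assms(1,2) srt])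
  have B: "compact (Mset \<beta> \<rho> \<sigma> y)" by (rule finite_imp_compact[OF main_finite])
  have C: "\<forall>V. open V \<and> Mset \<beta> \<rho> \<sigma> y \<subseteq> V \<longrightarrow>
          (\<exists>U. open U \<and> y \<in> U \<and> (\<forall>u\<in>U. Mset \<beta> \<rho> \<sigma> u \<subseteq> V))"
  proof (intro allI impI)
    fix V assume V: "open V \<and> Mset \<beta> \<rho> \<sigma> y \<subseteq> V"
    have "\<forall>u\<in>ball y \<delta>. Mset \<beta> \<rho> \<sigma> u \<subseteq> V" using loc inball V by blast
    then show "\<exists>U. open U \<and> y \<in> U \<and> (\<forall>u\<in>U. Mset \<beta> \<rho> \<sigma> u \<subseteq> V)"
      using dpos by (intro exI[of _ "ball y \<delta>"]) auto
  qed
  have D: "\<forall>M\<in>Mset \<beta> \<rho> \<sigma> y. transpose M = M \<and> psd M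
          \<and> transpose (mat 1 - M) = mat 1 - M \<and> psd (mat 1 - M)"
    using main_psd[OF _ srt] by blast
  have E: "\<exists>Y. open Y \<and> y \<in> Y \<and> (\<forall>u\<in>Y. \<forall>M\<in>Mset \<beta> \<rho> \<sigma> u.
          prox (penp \<beta> \<rho>) u - prox (penp \<beta> \<rho>) y - M *v (u - y) = 0)"
    using loc inball dpos by (intro exI[of _ "ball y \<delta>"]) auto
  show ?thesis using A B C D E by blast
qed

end
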